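(* Let $\Gamma=(V,E)$ be a graph and for each $v\in V$ let $C_v$ be a left LCM monoid. Then the graph product $C=\Gamma_{v\in V}C_v$ is also a left LCM monoid.
   Context: A graph $\Gamma=(V,E)$ consists of a set $V$ of vertices and an irreflexive symmetric relation $E\subseteq V\times V$. For monoids $C_v$ ($v\in V$, pairwise disjoint), the graph product $\Gamma_{v\in V}C_v$ is the quotient of the free product of the $C_v$ by the congruence generated by all pairs $(mn,nm)$ with $m\in C_u$, $n\in C_v$, $(u,v)\in E$. A left LCM monoid is a right cancellative monoid $C$ in which, for all $a,b\in C$, the intersection $Ca\cap Cb$ of principal left ideals is either empty or a principal left ideal $Cm$ for some $m\in C$. *)

theory Defs
  imports "HOL-Algebra.Group"
begin

definition principal_left_ideal :: "('a, 'b) monoid_scheme \<Rightarrow> 'a \<Rightarrow> 'a set" where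
  "principal_left_ideal M a = {c \<otimes>\<^bsub>M\<^esub> a | c. c \<in> carrier M}"

definition right_cancellative :: "('a, 'b) monoid_scheme \<Rightarrow> bool" where
  "right_cancellative M \<longleftrightarrow>
     (\<forall>a\<in>carrier M. \<forall>b\<in>carrier M. \<forall>c\<in>carrier M.
        a \<otimes>\<^bsub>M\<^esub> c = b \<otimes>\<^bsub>M\<^esub> c \<longrightarrow> a = b)"

definition left_LCM_monoid :: "('a, 'b) monoid_scheme \<Rightarrow> bool" where
  "left_LCM_monoid M \<longleftrightarrow> monoid M \<and> right_cancellative M \<and>
     (\<forall>a\<in>carrier M. \<forall>b\<in>carrier M.
        principal_left_ideal M a \<inter> principal_left_ideal M b = {} \<or>
        (\<exists>m\<in>carrier M. principal_left_ideal M a \<inter> principal_left_ideal M b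
                          = principal_left_ideal M m))"

text \<open>Letters of the free product: elements of C v tagged by their vertex v
  (this makes the carriers pairwise disjoint).\<close>

definition gp_letters :: "'v set \<Rightarrow> ('v \<Rightarrow> 'a monoid) \<Rightarrow> ('v \<times> 'a) set" where
  "gp_letters V C = {(v, m). v \<in> V \<and> m \<in> carrier (C v)}"

text \<open>Defining relations: the free product of the C v is presented by
  identifying the identity of each C v with the empty word and a two-letter
  word from the same vertex with the product; the graph product additionally
  commutes letters from adjacent vertices.\<close>

inductive gp_basic :: "'v set \<Rightarrow> ('v \<times> 'v) set \<Rightarrow> ('v \<Rightarrow> 'a monoid)
    \<Rightarrow> ('v \<times> 'a) list \<Rightarrow> ('v \<times> 'a) list \<Rightarrow> bool"
  for V E C where
  unit: "v \<in> V \<Longrightarrow> gp_basic V E C [(v, \<one>\<^bsub>C v\<^esub>)] []"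
| mult: "v \<in> V \<Longrightarrow> a \<in> carrier (C v) \<Longrightarrow> b \<in> carrier (C v) \<Longrightarrow>
         gp_basic V E C [(v, a), (v, b)] [(v, a \<otimes>\<^bsub>C v\<^esub> b)]"
| comm: "(u, v) \<in> E \<Longrightarrow> u \<in> V \<Longrightarrow> v \<in> V \<Longrightarrow> m \<in> carrier (C u) \<Longrightarrow> n \<in> carrier (C v) \<Longrightarrow>
         gp_basic V E C [(u, m), (v, n)] [(v, n), (u, m)]"

inductive gp_cong :: "'v set \<Rightarrow> ('v \<times> 'v) set \<Rightarrow> ('v \<Rightarrow> 'a monoid)
    \<Rightarrow> ('v \<times> 'a) list \<Rightarrow> ('v \<times> 'a) list \<Rightarrow> bool"
  for V E C where
  refl: "x \<in> lists (gp_letters V C) \<Longrightarrow> gp_cong V E C x x"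
| step: "x \<in> lists (gp_letters V C) \<Longrightarrow> y \<in> lists (gp_letters V C) \<Longrightarrow>
         gp_basic V E C r s \<Longrightarrow> gp_cong V E C (x @ r @ y) (x @ s @ y)"
| sym: "gp_cong V E C x y \<Longrightarrow> gp_cong V E C y x"
| trans: "gp_cong V E C x y \<Longrightarrow> gp_cong V E C y z \<Longrightarrow> gp_cong V E C x z"

definition gp_class :: "'v set \<Rightarrow> ('v \<times> 'v) set \<Rightarrow> ('v \<Rightarrow> 'a monoid)
    \<Rightarrow> ('v \<times> 'a) list \<Rightarrow> ('v \<times> 'a) list set" where
  "gp_class V E C x = {z. gp_cong V E C z x}"

definition graph_product :: "'v set \<Rightarrow> ('v \<times> 'v) set \<Rightarrow> ('v \<Rightarrow> 'a monoid)
    \<Rightarrow> ('v \<times> 'a) list set monoid" where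
  "graph_product V E C =
     \<lparr> carrier = gp_class V E C ` lists (gp_letters V C),
       mult = (\<lambda>X Y. {z. \<exists>x\<in>X. \<exists>y\<in>Y. gp_cong V E C z (x @ y)}),
       one = gp_class V E C [] \<rparr>"

end

theory Submission
  imports Defs
begin


locale gpl =
  fixes V :: "'v set" and E :: "('v \<times> 'v) set" and C :: "'v \<Rightarrow> 'a monoid"
  assumes E_sub: "E \<subseteq> V \<times> V" and irr: "irrefl E" and symE: "sym E"
    and LCM: "\<forall>v\<in>V. left_LCM_monoid (C v)"
begin

abbreviation L where "L \<equiv> gp_letters V C"
abbreviation cong where "cong \<equiv> gp_cong V E C"

lemma mon: "v \<in> V \<Longrightarrow> monoid (C v)"
  using LCM unfolding left_LCM_monoid_def by blast

lemma rc: "v \<in> V \<Longrightarrow> right_cancellative (C v)"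
  using LCM unfolding left_LCM_monoid_def by blast

lemma rcancel: "v \<in> V \<Longrightarrow> a \<in> carrier (C v) \<Longrightarrow> b \<in> carrier (C v) \<Longrightarrow> c \<in> carrier (C v)
  \<Longrightarrow> a \<otimes>\<^bsub>C v\<^esub> c = b \<otimes>\<^bsub>C v\<^esub> c \<Longrightarrow> a = b"
  using rc unfolding right_cancellative_def by blast

lemma letter_iff[simp]: "(v, m) \<in> L \<longleftrightarrow> v \<in> V \<and> m \<in> carrier (C v)"
  by (simp add: gp_letters_def)

lemma letter_fst: "x \<in> L \<Longrightarrow> fst x \<in> V"
  by (cases x) simp

lemma letter_snd: "x \<in> L \<Longrightarrow> snd x \<in> carrier (C (fst x))"
  by (cases x) simp

lemma irrE[simp]: "(v, v) \<notin> E"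
  using irr by (simp add: irrefl_def)

lemma symE': "(u, v) \<in> E \<Longrightarrow> (v, u) \<in> E"
  using symE by (simp add: sym_def)

lemma E_V: "(u, v) \<in> E \<Longrightarrow> u \<in> V \<and> v \<in> V"
  using E_sub by blast

lemma basic_lists: "gp_basic V E C r s \<Longrightarrow> r \<in> lists L \<and> s \<in> lists L"
  by (induction rule: gp_basic.induct) (auto intro: monoid.m_closed[OF mon] monoid.one_closed[OF mon])

lemma cong_lists: "cong x y \<Longrightarrow> x \<in> lists L \<and> y \<in> lists L"
  by (induction rule: gp_cong.induct) (auto dest: basic_lists)

lemma cong_refl: "x \<in> lists L \<Longrightarrow> cong x x"
  by (rule gp_cong.refl)

lemma cong_sym: "cong x y \<Longrightarrow> cong y x"
  by (rule gp_cong.sym)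

lemma cong_trans: "cong x y \<Longrightarrow> cong y z \<Longrightarrow> cong x z"
  by (rule gp_cong.trans)

lemma cong_app_right: "cong x y \<Longrightarrow> z \<in> lists L \<Longrightarrow> cong (x @ z) (y @ z)"
proof (induction rule: gp_cong.induct)
  case (refl x) then show ?case by (intro gp_cong.refl) simp
next
  case (step x y r s)
  then show ?case using gp_cong.step[where x=x and y="y @ z" and r=r and s=s] by simp
next
  case (sym x y) then show ?case by (auto intro: gp_cong.sym)
next
  case (trans x y z') then show ?case by (auto intro: gp_cong.trans)
qed

lemma cong_app_left: "cong x y \<Longrightarrow> z \<in> lists L \<Longrightarrow> cong (z @ x) (z @ y)"
proof (induction rule: gp_cong.induct)
  case (refl x) then show ?case by (intro gp_cong.refl) simp
next
  case (step x y r s)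
  then show ?case using gp_cong.step[where x="z @ x" and y=y and r=r and s=s] by simp
next
  case (sym x y) then show ?case by (auto intro: gp_cong.sym)
next
  case (trans x y z') then show ?case by (auto intro: gp_cong.trans)
qed

lemma cong_app: "cong x y \<Longrightarrow> cong x' y' \<Longrightarrow> cong (x @ x') (y @ y')"
  by (meson cong_app_left cong_app_right cong_lists cong_trans)

lemma cong_basic: "x \<in> lists L \<Longrightarrow> y \<in> lists L \<Longrightarrow> gp_basic V E C r s \<Longrightarrow> cong (x @ r @ y) (x @ s @ y)"
  by (rule gp_cong.step)

section \<open>Projections\<close>

definition pr :: "'v \<Rightarrow> 'v \<Rightarrow> ('v \<times> 'a) list \<Rightarrow> ('v \<times> 'a) list" where
  "pr u v w = filter (\<lambda>x. fst x = u \<or> fst x = v) w"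

definition peq :: "('v \<times> 'a) list \<Rightarrow> ('v \<times> 'a) list \<Rightarrow> bool" where
  "peq w w' \<longleftrightarrow> (\<forall>u v. (u, v) \<notin> E \<longrightarrow> pr u v w = pr u v w')"

lemma pr_comm: "pr u v w = pr v u w"
  unfolding pr_def by meson

lemma pr_app[simp]: "pr u v (a @ b) = pr u v a @ pr u v b"
  by (simp add: pr_def)

lemma pr_Cons: "pr u v (x # b) = (if fst x = u \<or> fst x = v then x # pr u v b else pr u v b)"
  by (simp add: pr_def)

lemma pr_Nil[simp]: "pr u v [] = []"
  by (simp add: pr_def)

lemma peq_refl[simp]: "peq w w" by (simp add: peq_def)
lemma peq_sym: "peq w w' \<Longrightarrow> peq w' w" by (simp add: peq_def)
lemma peq_trans: "peq w w' \<Longrightarrow> peq w' w'' \<Longrightarrow> peq w w''" by (simp add: peq_def)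
lemma peq_app: "peq a b \<Longrightarrow> peq c d \<Longrightarrow> peq (a @ c) (b @ d)" by (simp add: peq_def)

lemma peq_snoc_cancel: "peq (a @ [x]) (b @ [x]) \<Longrightarrow> peq a b"
  unfolding peq_def by (auto simp: pr_def split: if_splits)

definition extv :: "'v \<Rightarrow> 'v list \<Rightarrow> bool" where
  "extv v vs \<longleftrightarrow> v \<in> set vs \<and> (\<forall>u. (u, v) \<notin> E \<longrightarrow> last (filter (\<lambda>x. x = u \<or> x = v) vs) = v)"

definition ext :: "'v \<Rightarrow> ('v \<times> 'a) list \<Rightarrow> bool" where
  "ext v w \<longleftrightarrow> extv v (map fst w)"

lemma map_fst_pr: "map fst (pr u v w) = filter (\<lambda>x. x = u \<or> x = v) (map fst w)"
  by (simp add: pr_def filter_map o_def)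

lemma extv_cong:
  assumes "\<And>x. (x, v) \<notin> E \<Longrightarrow> filter (\<lambda>y. y = x \<or> y = v) vs = filter (\<lambda>y. y = x \<or> y = v) vs'"
  shows "extv v vs = extv v vs'"
proof -
  have "filter (\<lambda>y. y = v \<or> y = v) vs = filter (\<lambda>y. y = v \<or> y = v) vs'" using assms[of v] by simp
  moreover have "\<And>ws. (v \<in> set ws) = (filter (\<lambda>y. y = v) ws \<noteq> [])" by (auto simp: filter_empty_conv)
  ultimately have "(v \<in> set vs) = (v \<in> set vs')" by simp
  then show ?thesis unfolding extv_def using assms by auto
qed

lemma ext_cong:
  assumes "\<And>x. (x, v) \<notin> E \<Longrightarrow> pr x v w = pr x v w'"
  shows "ext v w = ext v w'"
  unfolding ext_def
  by (rule extv_cong) (metis assms map_fst_pr)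

lemma ext_peq: "peq w w' \<Longrightarrow> ext v w = ext v w'"
  by (rule ext_cong) (simp add: peq_def)

lemma extv_app_dep:
  assumes "\<exists>y\<in>set bs. (y, u) \<notin> E"
  shows "extv u (as @ bs) = extv u bs"
proof -
  obtain y where y: "y \<in> set bs" "(y, u) \<notin> E" using assms by blast
  show ?thesis
  proof
    assume a: "extv u (as @ bs)"
    have ne: "filter (\<lambda>x. x = y \<or> x = u) bs \<noteq> []" using y by (auto simp: filter_empty_conv)
    have "last (filter (\<lambda>x. x = y \<or> x = u) (as @ bs)) = u" using a y unfolding extv_def by blast
    then have "last (filter (\<lambda>x. x = y \<or> x = u) bs) = u" using ne by simp
    then have "u \<in> set bs" using ne by (metis filter_is_subset last_in_set subsetD)
    moreover have "last (filter (\<lambda>x. x = u' \<or> x = u) bs) = u" if "(u', u) \<notin> E" for u'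
    proof -
      have "filter (\<lambda>x. x = u' \<or> x = u) bs \<noteq> []" using \<open>u \<in> set bs\<close> by (auto simp: filter_empty_conv)
      then show ?thesis using a that unfolding extv_def by force
    qed
    ultimately show "extv u bs" unfolding extv_def by blast
  next
    assume a: "extv u bs"
    have "last (filter (\<lambda>x. x = u' \<or> x = u) (as @ bs)) = u" if "(u', u) \<notin> E" for u'
    proof -
      have "filter (\<lambda>x. x = u' \<or> x = u) bs \<noteq> []" using a by (auto simp: filter_empty_conv extv_def)
      then show ?thesis using a that unfolding extv_def by force
    qed
    then show "extv u (as @ bs)" using a unfolding extv_def by auto
  qed
qed

lemma extv_app_indep:
  assumes "\<forall>y\<in>set bs. (y, u) \<in> E"
  shows "extv u (as @ bs) = extv u as"
proof (rule extv_cong)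
  fix x assume "(x, u) \<notin> E"
  then have "filter (\<lambda>y. y = x \<or> y = u) bs = []" using assms by (auto simp: filter_empty_conv)
  then show "filter (\<lambda>y. y = x \<or> y = u) (as @ bs) = filter (\<lambda>y. y = x \<or> y = u) as" by simp
qed

lemma extv_ins:
  assumes "(v, u) \<in> E"
  shows "extv u (ps @ v # qs) = extv u (ps @ qs)"
proof (rule extv_cong)
  fix x assume "(x, u) \<notin> E"
  then have "\<not> (v = x \<or> v = u)" using assms by auto
  then show "filter (\<lambda>y. y = x \<or> y = u) (ps @ v # qs) = filter (\<lambda>y. y = x \<or> y = u) (ps @ qs)" by simp
qed

lemma extv_snoc: "extv u (vs @ [u])"
  unfolding extv_def by simp

lemma ext_snoc[simp]: "ext v (w @ [(v, k)])"
  by (simp add: ext_def extv_snoc)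

lemma ext_map_fst: "map fst w = map fst w' \<Longrightarrow> ext v w = ext v w'"
  by (simp add: ext_def)

lemma ext_Nil[simp]: "\<not> ext v []"
  by (simp add: ext_def extv_def)

fun dlr :: "'v \<Rightarrow> ('v \<times> 'a) list \<Rightarrow> ('v \<times> 'a) list" where
  "dlr v [] = []"
| "dlr v (x # xs) = (if fst x = v then xs else x # dlr v xs)"

definition dl :: "'v \<Rightarrow> ('v \<times> 'a) list \<Rightarrow> ('v \<times> 'a) list" where
  "dl v w = rev (dlr v (rev w))"

definition lastn :: "'v \<Rightarrow> ('v \<times> 'a) list \<Rightarrow> 'a" where
  "lastn v w = snd (last (filter (\<lambda>x. fst x = v) w))"

lemma dlr_split: "(\<forall>y\<in>set ys. fst y \<noteq> v) \<Longrightarrow> fst x = v \<Longrightarrow> dlr v (ys @ x # zs) = ys @ zs"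
  by (induction ys) auto

lemma dlr_nov: "(\<forall>y\<in>set ys. fst y \<noteq> v) \<Longrightarrow> dlr v (ys @ zs) = ys @ dlr v zs"
  by (induction ys) auto

lemma dl_split: "(\<forall>y\<in>set b. fst y \<noteq> v) \<Longrightarrow> fst x = v \<Longrightarrow> dl v (a @ x # b) = a @ b"
  unfolding dl_def by (simp add: dlr_split)

lemma dl_app_nov: "(\<forall>y\<in>set b. fst y \<noteq> v) \<Longrightarrow> dl v (a @ b) = dl v a @ b"
  unfolding dl_def by (simp add: dlr_nov)

lemma dl_snoc[simp]: "dl v (w @ [(v, k)]) = w"
  using dl_split[of "[]" v "(v, k)" w] by simp

lemma lastn_snoc[simp]: "lastn v (w @ [(v, k)]) = k"
  by (simp add: lastn_def)

lemma pr_vv: "pr v v w = filter (\<lambda>x. fst x = v) w"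
  by (simp add: pr_def)

lemma lastn_cong: "pr v v w = pr v v w' \<Longrightarrow> lastn v w = lastn v w'"
  by (simp add: lastn_def pr_vv)

lemma lastn_peq: "peq w w' \<Longrightarrow> lastn v w = lastn v w'"
  by (rule lastn_cong) (simp add: peq_def)

lemma ext_D:
  assumes "ext v w"
  shows "\<exists>a n b. w = a @ [(v, n)] @ b \<and> (\<forall>y\<in>set b. (fst y, v) \<in> E) \<and> dl v w = a @ b \<and> lastn v w = n"
proof -
  have "v \<in> set (map fst w)" using assms by (simp add: ext_def extv_def)
  then have "\<exists>x\<in>set w. fst x = v" by auto
  then obtain a x b where w: "w = a @ x # b" and x: "fst x = v" and b: "\<forall>y\<in>set b. fst y \<noteq> v"
    using split_list_last_prop[of w "\<lambda>x. fst x = v"] by blast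
  obtain n where xn: "x = (v, n)" using x by (cases x) auto
  have bE: "(fst y, v) \<in> E" if y: "y \<in> set b" for y
  proof (rule ccontr)
    assume nE: "(fst y, v) \<notin> E"
    let ?P = "\<lambda>z. z = fst y \<or> z = v"
    have l: "last (filter ?P (map fst w)) = v" using assms nE by (simp add: ext_def extv_def)
    have ne: "filter ?P (map fst b) \<noteq> []" using y by (auto simp: filter_empty_conv)
    have "last (filter ?P (map fst w)) = last (filter ?P (map fst b))" using ne w by simp
    moreover have "last (filter ?P (map fst b)) \<in> set (map fst b)" using ne by (metis filter_is_subset last_in_set subsetD)
    ultimately have "v \<in> fst ` set b" using l by auto
    then show False using b by auto
  qed
  have dlw: "dl v w = a @ b" using w dl_split[OF b x] by simp
  have lw: "lastn v w = n"
  proof -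
    have "filter (\<lambda>x. fst x = v) b = []" using b by (auto simp: filter_empty_conv)
    then show ?thesis using w xn by (simp add: lastn_def)
  qed
  show ?thesis using w xn bE dlw lw by (intro exI[of _ a] exI[of _ n] exI[of _ b]) auto
qed

lemma pr_indep_Nil: "\<forall>y\<in>set b. (fst y, v) \<in> E \<Longrightarrow> (u, v) \<notin> E \<Longrightarrow> pr u v b = []"
  by (auto simp: pr_def filter_empty_conv dest: symE')

lemma move_peq:
  assumes "\<forall>y\<in>set b. (fst y, v) \<in> E"
  shows "peq (a @ [(v, n)] @ b) (a @ b @ [(v, n)])"
  unfolding peq_def
proof (intro allI impI)
  fix u u' assume uu: "(u, u') \<notin> E"
  show "pr u u' (a @ [(v, n)] @ b) = pr u u' (a @ b @ [(v, n)])"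
  proof (cases "v = u \<or> v = u'")
    case True
    then have "pr u u' b = []"
      using uu pr_indep_Nil[OF assms] by (metis pr_comm symE')
    moreover have "pr u u' ((v,n)#b) = pr u u' [(v,n)] @ pr u u' b" by (simp add: pr_def)
    ultimately show ?thesis by simp
  next
    case False
    then show ?thesis by (simp add: pr_def)
  qed
qed

end


context gpl begin

definition rmul :: "('v \<times> 'a) list \<Rightarrow> ('v \<times> 'a) \<Rightarrow> ('v \<times> 'a) list" where
  "rmul w l = (case l of (v, m) \<Rightarrow>
     if ext v w then (if lastn v w \<otimes>\<^bsub>C v\<^esub> m = \<one>\<^bsub>C v\<^esub> then dl v w
                      else dl v w @ [(v, lastn v w \<otimes>\<^bsub>C v\<^esub> m)])
     else if m = \<one>\<^bsub>C v\<^esub> then w else w @ [(v, m)])"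

lemma rmul_simp: "rmul w (v, m) =
     (if ext v w then (if lastn v w \<otimes>\<^bsub>C v\<^esub> m = \<one>\<^bsub>C v\<^esub> then dl v w
                      else dl v w @ [(v, lastn v w \<otimes>\<^bsub>C v\<^esub> m)])
     else if m = \<one>\<^bsub>C v\<^esub> then w else w @ [(v, m)])"
  by (simp add: rmul_def)

definition fv :: "'v \<Rightarrow> ('v \<times> 'a) list \<Rightarrow> 'a \<Rightarrow> ('v \<times> 'a) list \<Rightarrow> ('v \<times> 'a) list" where
  "fv v w m p =
     (if ext v w then (if lastn v w \<otimes>\<^bsub>C v\<^esub> m = \<one>\<^bsub>C v\<^esub> then butlast p
                      else butlast p @ [(v, lastn v w \<otimes>\<^bsub>C v\<^esub> m)])
     else if m = \<one>\<^bsub>C v\<^esub> then p else p @ [(v, m)])"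

lemma pr_rmul_v:
  assumes "(u, v) \<notin> E"
  shows "pr u v (rmul w (v, m)) = fv v w m (pr u v w)"
proof (cases "ext v w")
  case True
  then obtain a n b where w: "w = a @ [(v, n)] @ b" and b: "\<forall>y\<in>set b. (fst y, v) \<in> E"
    and d: "dl v w = a @ b" and ln: "lastn v w = n" using ext_D by blast
  have pb: "pr u v b = []" using pr_indep_Nil[OF b assms] .
  have pw: "pr u v w = pr u v a @ [(v, n)]" using w pb by (simp add: pr_def)
  show ?thesis using True d ln pw pb by (simp add: rmul_simp fv_def pr_def)
next
  case False
  then show ?thesis by (simp add: rmul_simp fv_def pr_def)
qed

lemma pr_rmul_other:
  assumes "v \<noteq> u" "v \<noteq> u'"
  shows "pr u u' (rmul w (v, m)) = pr u u' w"
proof (cases "ext v w")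
  case True
  then obtain a n b where w: "w = a @ [(v, n)] @ b"
    and d: "dl v w = a @ b" using ext_D by blast
  show ?thesis using True d w assms by (simp add: rmul_simp pr_def)
next
  case False
  then show ?thesis using assms by (simp add: rmul_simp pr_def)
qed

lemma fv_cong: "ext v w = ext v w' \<Longrightarrow> lastn v w = lastn v w' \<Longrightarrow> fv v w m p = fv v w' m p"
  by (simp add: fv_def)

lemma rmul_peq:
  assumes "peq w w'"
  shows "peq (rmul w l) (rmul w' l)"
proof -
  obtain v m where l: "l = (v, m)" by (cases l)
  have e: "ext v w = ext v w'" using ext_peq[OF assms] .
  have n: "lastn v w = lastn v w'" using lastn_peq[OF assms] .
  have pw: "pr u u' w = pr u u' w'" if "(u, u') \<notin> E" for u u' using assms that by (simp add: peq_def)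
  show ?thesis unfolding peq_def l
  proof (intro allI impI)
    fix u u' assume uu: "(u, u') \<notin> E"
    show "pr u u' (rmul w (v, m)) = pr u u' (rmul w' (v, m))"
    proof (cases "v = u'")
      case True
      then show ?thesis using pr_rmul_v[of u v w m] pr_rmul_v[of u v w' m] uu pw[OF uu] fv_cong[OF e n] by simp
    next
      case False
      note F = this
      show ?thesis
      proof (cases "v = u")
        case True
        have uu': "(u', u) \<notin> E" using uu symE' by blast
        then show ?thesis using True pr_rmul_v[of u' v w m] pr_rmul_v[of u' v w' m] pw[OF uu] fv_cong[OF e n]
          by (simp add: pr_comm[of u u'])
      next
        case False
        then show ?thesis using F pr_rmul_other pw[OF uu] by simp
      qed
    qed
  qed
qed

section \<open>Reduced words\<close>

definition Rd :: "('v \<times> 'a) list \<Rightarrow> bool" where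
  "Rd w \<longleftrightarrow> w \<in> lists L \<and> (\<forall>x\<in>set w. snd x \<noteq> \<one>\<^bsub>C (fst x)\<^esub>) \<and>
            (\<forall>p l q. w = p @ [l] @ q \<longrightarrow> \<not> ext (fst l) p)"

lemma Rd_Nil[simp]: "Rd []"
  by (simp add: Rd_def)

lemma Rd_lists: "Rd w \<Longrightarrow> w \<in> lists L"
  by (simp add: Rd_def)

lemma Rd_snoc:
  assumes "Rd w" "\<not> ext v w" "v \<in> V" "m \<in> carrier (C v)" "m \<noteq> \<one>\<^bsub>C v\<^esub>"
  shows "Rd (w @ [(v, m)])"
proof -
  have "\<not> ext (fst l) p" if e: "w @ [(v, m)] = p @ [l] @ q" for p l q
  proof (cases q rule: rev_exhaust)
    case Nil
    then show ?thesis using e assms(2) by force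
  next
    case (snoc q' x)
    then have "w = p @ [l] @ q'" using e by simp
    then show ?thesis using assms(1) unfolding Rd_def by blast
  qed
  then show ?thesis using assms by (auto simp: Rd_def)
qed

lemma ext_ins: "(v, u) \<in> E \<Longrightarrow> ext u (a @ [(v, n)] @ b) = ext u (a @ b)"
  unfolding ext_def using extv_ins[of v u "map fst a" "map fst b"] by simp

lemma Rd_dl:
  assumes R: "Rd w" and e: "ext v w"
  shows "Rd (dl v w) \<and> \<not> ext v (dl v w)"
proof -
  obtain a n b where w: "w = a @ [(v, n)] @ b" and b: "\<forall>y\<in>set b. (fst y, v) \<in> E"
    and d: "dl v w = a @ b" and ln: "lastn v w = n" using ext_D[OF e] by blast
  have "\<not> ext v a" using R w unfolding Rd_def by fastforce
  moreover have "ext v (a @ b) = ext v a"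
    unfolding ext_def using extv_app_indep[of "map fst b" v "map fst a"] b by auto
  ultimately have ne: "\<not> ext v (dl v w)" using d by simp
  have dec: "\<not> ext (fst l) p" if pq: "a @ b = p @ [l] @ q" for p l q
  proof -
    from pq have "a @ b = p @ ([l] @ q)" by simp
    then obtain us where "(a = p @ us \<and> us @ b = [l] @ q) \<or> (a @ us = p \<and> b = us @ [l] @ q)"
      unfolding append_eq_append_conv2 by blast
    then show ?thesis
    proof
      assume A: "a = p @ us \<and> us @ b = [l] @ q"
      show ?thesis
      proof (cases us)
        case Nil
        then have bl: "b = l # q" and pa: "p = a" using A by auto
        have "(fst l, v) \<in> E" using b bl by simp
        then have "(v, fst l) \<in> E" by (rule symE')
        then have "ext (fst l) (a @ [(v, n)] @ []) = ext (fst l) (a @ [])" by (rule ext_ins)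
        moreover have "\<not> ext (fst l) (a @ [(v, n)])" using R w bl unfolding Rd_def
          by (metis append.assoc append_Cons append_Nil)
        ultimately show ?thesis using pa by simp
      next
        case (Cons l' us')
        then have "w = p @ [l] @ (us' @ [(v, n)] @ b)" using A w by auto
        then show ?thesis using R unfolding Rd_def by blast
      qed
    next
      assume B: "a @ us = p \<and> b = us @ [l] @ q"
      have "(fst l, v) \<in> E" using b B by simp
      then have "(v, fst l) \<in> E" by (rule symE')
      then have "ext (fst l) (a @ [(v, n)] @ us) = ext (fst l) (a @ us)" by (rule ext_ins)
      moreover have "w = (a @ [(v, n)] @ us) @ [l] @ q" using w B by simp
      then have "\<not> ext (fst l) (a @ [(v, n)] @ us)" using R unfolding Rd_def by blast
      ultimately show ?thesis using B by simp
    qed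
  qed
  have "a @ b \<in> lists L" "\<forall>x\<in>set (a @ b). snd x \<noteq> \<one>\<^bsub>C (fst x)\<^esub>" using R w unfolding Rd_def by auto
  then have "Rd (a @ b)" using dec unfolding Rd_def by blast
  then show ?thesis using ne d by simp
qed

lemma Rd_lastn:
  assumes R: "Rd w" and e: "ext v w"
  shows "lastn v w \<in> carrier (C v) \<and> lastn v w \<noteq> \<one>\<^bsub>C v\<^esub> \<and> v \<in> V"
proof -
  obtain a n b where w: "w = a @ [(v, n)] @ b" and ln: "lastn v w = n" using ext_D[OF e] by blast
  then show ?thesis using R unfolding Rd_def by auto
qed

lemma Rd_rmul:
  assumes R: "Rd w" and l: "(v, m) \<in> L"
  shows "Rd (rmul w (v, m))"
proof (cases "ext v w")
  case True
  note dl = Rd_dl[OF R True]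
  note ln = Rd_lastn[OF R True]
  have "lastn v w \<otimes>\<^bsub>C v\<^esub> m \<in> carrier (C v)" using ln l monoid.m_closed[OF mon] by auto
  then show ?thesis using True dl ln Rd_snoc[of "dl v w" v "lastn v w \<otimes>\<^bsub>C v\<^esub> m"] by (simp add: rmul_simp)
next
  case False
  then show ?thesis using R l Rd_snoc[of w v m] by (simp add: rmul_simp)
qed

lemma Rd_rmul': "Rd w \<Longrightarrow> l \<in> L \<Longrightarrow> Rd (rmul w l)"
  by (cases l) (simp add: Rd_rmul)

lemma Rd_F: "Rd w \<Longrightarrow> x \<in> lists L \<Longrightarrow> Rd (foldl rmul w x)"
  by (induction x arbitrary: w) (auto intro: Rd_rmul')

lemma move_cong:
  assumes "b \<in> lists L" "\<forall>y\<in>set b. (v, fst y) \<in> E" "a \<in> lists L" "(v, n) \<in> L"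
  shows "cong (a @ [(v, n)] @ b) (a @ b @ [(v, n)])"
  using assms
proof (induction b arbitrary: a)
  case Nil
  then show ?case by (simp add: cong_refl)
next
  case (Cons y b)
  obtain u k where y: "y = (u, k)" by (cases y)
  have vu: "(v, u) \<in> E" using Cons y by simp
  have "gp_basic V E C [(v, n), (u, k)] [(u, k), (v, n)]"
    using vu Cons y E_V[OF vu] by (intro gp_basic.comm) auto
  then have 1: "cong (a @ [(v, n), (u, k)] @ b) (a @ [(u, k), (v, n)] @ b)"
    using Cons by (intro cong_basic) auto
  have 2: "cong ((a @ [(u, k)]) @ [(v, n)] @ b) ((a @ [(u, k)]) @ b @ [(v, n)])"
    using Cons y by (intro Cons.IH) auto
  show ?case using cong_trans[OF 1] 2 y by simp
qed

lemma rmul_cong: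
  assumes R: "Rd w" and l: "(v, m) \<in> L"
  shows "cong (rmul w (v, m)) (w @ [(v, m)])"
proof (cases "ext v w")
  case True
  obtain a n b where w: "w = a @ [(v, n)] @ b" and b: "\<forall>y\<in>set b. (fst y, v) \<in> E"
    and d: "dl v w = a @ b" and ln: "lastn v w = n" using ext_D[OF True] by blast
  have wl: "w \<in> lists L" using R by (simp add: Rd_def)
  have vV: "v \<in> V" and mC: "m \<in> carrier (C v)" using l by auto
  have nC: "n \<in> carrier (C v)" using wl w by auto
  have al: "a \<in> lists L" "b \<in> lists L" using wl w by auto
  have 1: "cong w (a @ b @ [(v, n)])" using move_cong[of b v a n] al b nC vV w symE' by auto
  have 2: "cong (w @ [(v, m)]) (a @ b @ [(v, n), (v, m)])"
    using cong_app_right[OF 1, of "[(v, m)]"] l by simp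
  have "gp_basic V E C [(v, n), (v, m)] [(v, n \<otimes>\<^bsub>C v\<^esub> m)]" using vV nC mC by (rule gp_basic.mult)
  then have 3: "cong ((a @ b) @ [(v, n), (v, m)] @ []) ((a @ b) @ [(v, n \<otimes>\<^bsub>C v\<^esub> m)] @ [])"
    using al by (intro cong_basic) auto
  have 4: "cong (w @ [(v, m)]) (a @ b @ [(v, n \<otimes>\<^bsub>C v\<^esub> m)])" using cong_trans[OF 2] 3 by simp
  show ?thesis
  proof (cases "n \<otimes>\<^bsub>C v\<^esub> m = \<one>\<^bsub>C v\<^esub>")
    case True
    have "gp_basic V E C [(v, \<one>\<^bsub>C v\<^esub>)] []" using vV by (rule gp_basic.unit)
    then have 5: "cong ((a @ b) @ [(v, \<one>\<^bsub>C v\<^esub>)] @ []) ((a @ b) @ [] @ [])"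
      using al by (intro cong_basic) auto
    have "cong (w @ [(v, m)]) (a @ b)" using cong_trans[OF 4] 5 True by simp
    then show ?thesis using True \<open>ext v w\<close> d ln by (simp add: rmul_simp cong_sym)
  next
    case False
    then show ?thesis using 4 \<open>ext v w\<close> d ln by (simp add: rmul_simp cong_sym)
  qed
next
  case False
  have wl: "w \<in> lists L" using R by (simp add: Rd_def)
  show ?thesis
  proof (cases "m = \<one>\<^bsub>C v\<^esub>")
    case True
    have "gp_basic V E C [(v, \<one>\<^bsub>C v\<^esub>)] []" using l by (intro gp_basic.unit) simp
    then have "cong (w @ [(v, \<one>\<^bsub>C v\<^esub>)] @ []) (w @ [] @ [])" using wl by (intro cong_basic) auto
    then show ?thesis using True False by (simp add: rmul_simp cong_sym)
  next
    case F: False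
    then show ?thesis using False wl l by (simp add: rmul_simp cong_refl)
  qed
qed

lemma F_cong: "Rd w \<Longrightarrow> x \<in> lists L \<Longrightarrow> cong (foldl rmul w x) (w @ x)"
proof (induction x arbitrary: w)
  case Nil
  then show ?case by (simp add: cong_refl Rd_lists)
next
  case (Cons l x)
  obtain v m where l: "l = (v, m)" by (cases l)
  have R: "Rd (rmul w l)" using Cons Rd_rmul' by simp
  have 1: "cong (foldl rmul (rmul w l) x) (rmul w l @ x)" using Cons.IH[OF R] Cons by simp
  have 2: "cong (rmul w l @ x) ((w @ [l]) @ x)"
    using Cons rmul_cong[of w v m] l by (intro cong_app_right) auto
  show ?case using cong_trans[OF 1 2] by simp
qed

definition rnf :: "('v \<times> 'a) list \<Rightarrow> ('v \<times> 'a) list" where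
  "rnf x = foldl rmul [] x"

lemma rnf_Rd: "x \<in> lists L \<Longrightarrow> Rd (rnf x)"
  by (simp add: rnf_def Rd_F)

lemma rnf_cong: "x \<in> lists L \<Longrightarrow> cong (rnf x) x"
  using F_cong[of "[]" x] by (simp add: rnf_def)

lemma rnf_app: "rnf (x @ y) = foldl rmul (rnf x) y"
  by (simp add: rnf_def)

lemma length_rmul: "length (rmul w l) \<le> Suc (length w)"
proof -
  obtain v m where l: "l = (v, m)" by (cases l)
  have "length (dl v w) \<le> length w" if "ext v w"
    using ext_D[OF that] by fastforce
  then show ?thesis using l by (auto simp: rmul_simp)
qed

lemma length_F: "length (foldl rmul w x) \<le> length w + length x"
proof (induction x arbitrary: w)
  case Nil then show ?case by simp
next
  case (Cons l x)
  have "length (foldl rmul (rmul w l) x) \<le> length (rmul w l) + length x" by (rule Cons.IH)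
  then show ?case using length_rmul[of w l] by simp
qed

lemma length_rnf: "length (rnf x) \<le> length x"
  using length_F[of "[]" x] by (simp add: rnf_def)

end


context gpl begin

lemma rmul_unit:
  assumes R: "Rd w" and vV: "v \<in> V"
  shows "peq (rmul w (v, \<one>\<^bsub>C v\<^esub>)) w"
proof (cases "ext v w")
  case True
  obtain a n b where w: "w = a @ [(v, n)] @ b" and b: "\<forall>y\<in>set b. (fst y, v) \<in> E"
    and d: "dl v w = a @ b" and ln: "lastn v w = n" using ext_D[OF True] by blast
  have nC: "n \<in> carrier (C v)" "n \<noteq> \<one>\<^bsub>C v\<^esub>" using Rd_lastn[OF R True] ln by auto
  have "n \<otimes>\<^bsub>C v\<^esub> \<one>\<^bsub>C v\<^esub> = n" using monoid.r_one[OF mon[OF vV] nC(1)] .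
  then have "rmul w (v, \<one>\<^bsub>C v\<^esub>) = a @ b @ [(v, n)]" using True d ln nC by (simp add: rmul_simp)
  then show ?thesis using move_peq[OF b, of a n] w peq_sym by simp
next
  case False
  then show ?thesis by (simp add: rmul_simp)
qed

lemma rmul_mult:
  assumes R: "Rd w" and vV: "v \<in> V" and aC: "a \<in> carrier (C v)" and bC: "b \<in> carrier (C v)"
  shows "rmul (rmul w (v, a)) (v, b) = rmul w (v, a \<otimes>\<^bsub>C v\<^esub> b)"
proof -
  interpret M: monoid "C v" using mon[OF vV] .
  show ?thesis
  proof (cases "ext v w")
    case True
    note ln = Rd_lastn[OF R True]
    note dl = Rd_dl[OF R True]
    let ?n = "lastn v w"
    have as: "?n \<otimes>\<^bsub>C v\<^esub> (a \<otimes>\<^bsub>C v\<^esub> b) = (?n \<otimes>\<^bsub>C v\<^esub> a) \<otimes>\<^bsub>C v\<^esub> b"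
      using ln aC bC by (simp add: M.m_assoc)
    show ?thesis
    proof (cases "?n \<otimes>\<^bsub>C v\<^esub> a = \<one>\<^bsub>C v\<^esub>")
      case True
      then have "?n \<otimes>\<^bsub>C v\<^esub> (a \<otimes>\<^bsub>C v\<^esub> b) = b" using as bC by simp
      then show ?thesis using True \<open>ext v w\<close> dl by (simp add: rmul_simp)
    next
      case False
      then show ?thesis using \<open>ext v w\<close> as by (simp add: rmul_simp)
    qed
  next
    case False
    show ?thesis
    proof (cases "a = \<one>\<^bsub>C v\<^esub>")
      case True
      then show ?thesis using False bC by (simp add: rmul_simp)
    next
      case F: False
      then show ?thesis using False by (simp add: rmul_simp)
    qed
  qed
qed

lemma ext_rmul_other:
  assumes "(u, v) \<in> E"
  shows "ext v (rmul w (u, m)) = ext v w \<and> lastn v (rmul w (u, m)) = lastn v w"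
proof -
  have uv: "u \<noteq> v" using assms by auto
  have "pr x v (rmul w (u, m)) = pr x v w" if "(x, v) \<notin> E" for x
    using that assms uv by (intro pr_rmul_other) auto
  then have "ext v (rmul w (u, m)) = ext v w" by (intro ext_cong) auto
  moreover have "lastn v (rmul w (u, m)) = lastn v w" using uv by (intro lastn_cong pr_rmul_other) auto
  ultimately show ?thesis by simp
qed

lemma comm_half:
  assumes uv: "(u, v) \<in> E" and xv: "(x, v) \<notin> E"
  shows "pr x v (rmul (rmul w (u, m)) (v, n)) = pr x v (rmul (rmul w (v, n)) (u, m))"
proof -
  have ux: "u \<noteq> x" "u \<noteq> v" using uv xv by auto
  have "pr x v (rmul (rmul w (u, m)) (v, n)) = fv v (rmul w (u, m)) n (pr x v (rmul w (u, m)))"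
    using pr_rmul_v[OF xv] .
  also have "\<dots> = fv v w n (pr x v w)"
    using ext_rmul_other[OF uv] pr_rmul_other[of u x v w m] ux by (simp add: fv_def)
  also have "\<dots> = pr x v (rmul w (v, n))" using pr_rmul_v[OF xv] by simp
  also have "\<dots> = pr x v (rmul (rmul w (v, n)) (u, m))" using pr_rmul_other[of u x v] ux by simp
  finally show ?thesis .
qed

lemma rmul_comm:
  assumes uv: "(u, v) \<in> E"
  shows "peq (rmul (rmul w (u, m)) (v, n)) (rmul (rmul w (v, n)) (u, m))"
  unfolding peq_def
proof (intro allI impI)
  fix a b assume ab: "(a, b) \<notin> E"
  have vu: "(v, u) \<in> E" using symE' uv .
  have ba: "(b, a) \<notin> E" using ab symE' by blast
  show "pr a b (rmul (rmul w (u, m)) (v, n)) = pr a b (rmul (rmul w (v, n)) (u, m))"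
  proof (cases "v = b")
    case True then show ?thesis using comm_half[OF uv] ab by simp
  next
    case F1: False
    show ?thesis
    proof (cases "v = a")
      case True then show ?thesis using comm_half[OF uv, of b] ba by (simp add: pr_comm[of a b])
    next
      case F2: False
      show ?thesis
      proof (cases "u = b")
        case True then show ?thesis using comm_half[OF vu, of a w n m] ab by simp
      next
        case F3: False
        show ?thesis
        proof (cases "u = a")
          case True then show ?thesis using comm_half[OF vu, of b w n m] ba by (simp add: pr_comm[of a b])
        next
          case F4: False
          then show ?thesis using F1 F2 F3 pr_rmul_other by (metis)
        qed
      qed
    qed
  qed
qed

lemma basic_peq:
  assumes R: "Rd w" and b: "gp_basic V E C r s"
  shows "peq (foldl rmul w r) (foldl rmul w s)"
  using b
proof (cases rule: gp_basic.cases)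
  case (unit v)
  then show ?thesis using rmul_unit[OF R] by simp
next
  case (mult v a b)
  then show ?thesis using rmul_mult[OF R] by simp
next
  case (comm u v m n)
  then show ?thesis using rmul_comm by simp
qed

lemma F_peq: "peq w w' \<Longrightarrow> peq (foldl rmul w y) (foldl rmul w' y)"
  by (induction y arbitrary: w w') (auto intro: rmul_peq)

lemma cong_peq: "cong x y \<Longrightarrow> peq (rnf x) (rnf y)"
proof (induction rule: gp_cong.induct)
  case (refl x) then show ?case by simp
next
  case (step x y r s)
  have R: "Rd (rnf x)" using rnf_Rd step by simp
  have "peq (foldl rmul (rnf x) r) (foldl rmul (rnf x) s)" using basic_peq[OF R step(3)] .
  then have "peq (foldl rmul (foldl rmul (rnf x) r) y) (foldl rmul (foldl rmul (rnf x) s) y)" by (rule F_peq)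
  then show ?case by (simp add: rnf_app)
next
  case (sym x y) then show ?case by (simp add: peq_sym)
next
  case (trans x y z) then show ?case using peq_trans by metis
qed

lemma peq_Nil: "peq [] w' \<Longrightarrow> w' = []"
proof (cases w')
  case (Cons y ys)
  assume "peq [] w'"
  then have "pr (fst y) (fst y) w' = []" unfolding peq_def by simp
  then show ?thesis using Cons by (simp add: pr_def)
qed simp

lemma peq_cong: "peq w w' \<Longrightarrow> w \<in> lists L \<Longrightarrow> w' \<in> lists L \<Longrightarrow> cong w w'"
proof (induction w arbitrary: w' rule: rev_induct)
  case Nil
  then show ?case using peq_Nil cong_refl by blast
next
  case (snoc x w0)
  obtain v a where x: "x = (v, a)" by (cases x)
  have "pr v v (w0 @ [x]) = pr v v w'" using snoc.prems(1) unfolding peq_def by simp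
  then have pvv: "pr v v w' = pr v v w0 @ [x]" using x by (simp add: pr_def)
  have "x \<in> set (pr v v w')" using pvv by simp
  then have "x \<in> set w' \<and> fst x = v" by (simp add: pr_def)
  then have "\<exists>z\<in>set w'. fst z = v" by blast
  then obtain c z d where w': "w' = c @ z # d" and z: "fst z = v" and d: "\<forall>y\<in>set d. fst y \<noteq> v"
    using split_list_last_prop[of w' "\<lambda>x. fst x = v"] by blast
  have "pr v v d = []" using d by (auto simp: pr_def filter_empty_conv)
  then have "pr v v w' = pr v v c @ [z]" using w' z by (simp add: pr_def)
  then have zx: "z = x" using pvv by simp
  have dE: "(fst y, v) \<in> E" if y: "y \<in> set d" for y
  proof (rule ccontr)
    assume nE: "(fst y, v) \<notin> E"
    have e1: "pr (fst y) v w' = pr (fst y) v (w0 @ [x])" using snoc.prems(1) nE unfolding peq_def by simp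
    have e2: "pr (fst y) v (w0 @ [x]) = pr (fst y) v w0 @ [x]" using x by (simp add: pr_def)
    have ne: "pr (fst y) v d \<noteq> []" using y by (auto simp: pr_def filter_empty_conv)
    have e3: "pr (fst y) v w' = pr (fst y) v (c @ [z]) @ pr (fst y) v d"
      using w' pr_app[of "fst y" v "c @ [z]" d] by simp
    have "last (pr (fst y) v w') = last (pr (fst y) v d)" using e3 ne by simp
    moreover have "last (pr (fst y) v w') = x" using e1 e2 by simp
    ultimately have lx: "last (pr (fst y) v d) = x" by simp
    have "last (pr (fst y) v d) \<in> set (pr (fst y) v d)" using ne by simp
    then have "last (pr (fst y) v d) \<in> set d" by (simp add: pr_def)
    then show False using lx d x by auto
  qed
  have wl: "w0 \<in> lists L" "x \<in> L" using snoc by auto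
  have cl: "c \<in> lists L" "d \<in> lists L" "z \<in> L" using snoc w' by auto
  have "peq w' (c @ d @ [x])" using move_peq[of d v c a] dE w' zx x by simp
  then have "peq (w0 @ [x]) ((c @ d) @ [x])" using peq_trans[OF snoc.prems(1)] by simp
  then have "peq w0 (c @ d)" by (rule peq_snoc_cancel)
  then have 1: "cong w0 (c @ d)" using snoc.IH wl cl by simp
  have 2: "cong (w0 @ [x]) ((c @ d) @ [x])" using cong_app_right[OF 1, of "[x]"] wl by simp
  have 3: "cong (c @ [x] @ d) (c @ d @ [x])" using move_cong[of d v c a] cl dE x zx symE' by auto
  show ?case using cong_trans[OF 2] cong_sym[OF 3] w' zx by simp
qed

lemma cong_iff: "x \<in> lists L \<Longrightarrow> y \<in> lists L \<Longrightarrow> cong x y \<longleftrightarrow> peq (rnf x) (rnf y)"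
proof
  assume "cong x y" then show "peq (rnf x) (rnf y)" by (rule cong_peq)
next
  assume a: "peq (rnf x) (rnf y)" "x \<in> lists L" "y \<in> lists L"
  have "cong (rnf x) (rnf y)" using peq_cong[OF a(1)] rnf_Rd Rd_lists a by blast
  then show "cong x y" using rnf_cong a by (meson cong_sym cong_trans)
qed

section \<open>Right cancellation\<close>

lemma last_pr:
  assumes "ext v w" "(x, v) \<notin> E"
  shows "pr x v w = pr x v (dl v w) @ [(v, lastn v w)]"
proof -
  obtain a n b where w: "w = a @ [(v, n)] @ b" and b: "\<forall>y\<in>set b. (fst y, v) \<in> E"
    and d: "dl v w = a @ b" and ln: "lastn v w = n" using ext_D[OF assms(1)] by blast
  have "pr x v b = []" using pr_indep_Nil[OF b assms(2)] .
  then show ?thesis using w d ln by (simp add: pr_def)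
qed

lemma no_ext_after:
  assumes R: "Rd w" and e: "ext v w"
    and H: "\<And>x. (x, v) \<notin> E \<Longrightarrow> \<exists>q k. pr x v (dl v w) = q @ [(v, k)]"
  shows False
proof -
  have "ext v (dl v w)"
  proof -
    obtain q k where "pr v v (dl v w) = q @ [(v, k)]" using H[of v] by auto
    then have "(v, k) \<in> set (pr v v (dl v w))" by simp
    then have "(v, k) \<in> set (dl v w)" by (simp add: pr_def)
    then have m: "v \<in> set (map fst (dl v w))" by force
    have "last (filter (\<lambda>y. y = x \<or> y = v) (map fst (dl v w))) = v" if xv: "(x, v) \<notin> E" for x
    proof -
      obtain q k where "pr x v (dl v w) = q @ [(v, k)]" using H[OF xv] by auto
      then have "map fst (pr x v (dl v w)) = map fst q @ [v]" by simp
      then have "filter (\<lambda>y. y = x \<or> y = v) (map fst (dl v w)) = map fst q @ [v]"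
        using map_fst_pr[of x v "dl v w"] by simp
      then show ?thesis by simp
    qed
    then show ?thesis using m unfolding ext_def extv_def by blast
  qed
  then show False using Rd_dl[OF R e] by simp
qed

lemma rc_mixed:
  assumes R1: "Rd w1" and R2: "Rd w2" and e1: "ext v w1" and l: "(v, m) \<in> L" and m1: "m \<noteq> \<one>\<^bsub>C v\<^esub>"
    and H: "\<And>x. (x, v) \<notin> E \<Longrightarrow> fv v w1 m (pr x v w1) = fv v w2 m (pr x v w2)"
  shows "ext v w2 \<and> (lastn v w1 \<otimes>\<^bsub>C v\<^esub> m = \<one>\<^bsub>C v\<^esub> \<longleftrightarrow> lastn v w2 \<otimes>\<^bsub>C v\<^esub> m = \<one>\<^bsub>C v\<^esub>)"
proof -
  have vV: "v \<in> V" and mC: "m \<in> carrier (C v)" using l by auto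
  interpret M: monoid "C v" using mon[OF vV] .
  note ln1 = Rd_lastn[OF R1 e1]
  let ?n1 = "lastn v w1"
  have p1: "pr x v w1 = pr x v (dl v w1) @ [(v, ?n1)]" if "(x, v) \<notin> E" for x using last_pr[OF e1 that] .
  have fv1: "fv v w1 m (pr x v w1) = (if ?n1 \<otimes>\<^bsub>C v\<^esub> m = \<one>\<^bsub>C v\<^esub> then pr x v (dl v w1)
                else pr x v (dl v w1) @ [(v, ?n1 \<otimes>\<^bsub>C v\<^esub> m)])" if "(x, v) \<notin> E" for x
    using p1[OF that] e1 by (simp add: fv_def)
  have e2: "ext v w2"
  proof (rule ccontr)
    assume ne2: "\<not> ext v w2"
    have fv2: "fv v w2 m (pr x v w2) = pr x v w2 @ [(v, m)]" for x using ne2 m1 by (simp add: fv_def)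
    show False
    proof (cases "?n1 \<otimes>\<^bsub>C v\<^esub> m = \<one>\<^bsub>C v\<^esub>")
      case True
      have "\<exists>q k. pr x v (dl v w1) = q @ [(v, k)]" if "(x, v) \<notin> E" for x
        using H[OF that] fv1[OF that] fv2 True by auto
      then show False using no_ext_after[OF R1 e1] by blast
    next
      case False
      have "pr v v (dl v w1) @ [(v, ?n1 \<otimes>\<^bsub>C v\<^esub> m)] = pr v v w2 @ [(v, m)]"
        using H[of v] fv1[of v] fv2 False by simp
      then have "?n1 \<otimes>\<^bsub>C v\<^esub> m = \<one>\<^bsub>C v\<^esub> \<otimes>\<^bsub>C v\<^esub> m" using mC by simp
      then have "?n1 = \<one>\<^bsub>C v\<^esub>" using rcancel[OF vV] ln1 mC by blast
      then show False using ln1 by simp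
    qed
  qed
  note ln2 = Rd_lastn[OF R2 e2]
  let ?n2 = "lastn v w2"
  have fv2: "fv v w2 m (pr x v w2) = (if ?n2 \<otimes>\<^bsub>C v\<^esub> m = \<one>\<^bsub>C v\<^esub> then pr x v (dl v w2)
                else pr x v (dl v w2) @ [(v, ?n2 \<otimes>\<^bsub>C v\<^esub> m)])" if "(x, v) \<notin> E" for x
    using last_pr[OF e2 that] e2 by (simp add: fv_def)
  have "?n1 \<otimes>\<^bsub>C v\<^esub> m = \<one>\<^bsub>C v\<^esub> \<longleftrightarrow> ?n2 \<otimes>\<^bsub>C v\<^esub> m = \<one>\<^bsub>C v\<^esub>"
  proof
    assume a1: "?n1 \<otimes>\<^bsub>C v\<^esub> m = \<one>\<^bsub>C v\<^esub>"
    show "?n2 \<otimes>\<^bsub>C v\<^esub> m = \<one>\<^bsub>C v\<^esub>"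
    proof (rule ccontr)
      assume a2: "?n2 \<otimes>\<^bsub>C v\<^esub> m \<noteq> \<one>\<^bsub>C v\<^esub>"
      have "\<exists>q k. pr x v (dl v w1) = q @ [(v, k)]" if xv: "(x, v) \<notin> E" for x
      proof -
        have "fv v w1 m (pr x v w1) = pr x v (dl v w1)" using fv1[OF xv] a1 by simp
        moreover have "fv v w2 m (pr x v w2) = pr x v (dl v w2) @ [(v, ?n2 \<otimes>\<^bsub>C v\<^esub> m)]" using fv2[OF xv] a2 by simp
        ultimately have "pr x v (dl v w1) = pr x v (dl v w2) @ [(v, ?n2 \<otimes>\<^bsub>C v\<^esub> m)]" using H[OF xv] by simp
        then show ?thesis by blast
      qed
      then show False using no_ext_after[OF R1 e1] by blast
    qed
  next
    assume a2: "?n2 \<otimes>\<^bsub>C v\<^esub> m = \<one>\<^bsub>C v\<^esub>"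
    show "?n1 \<otimes>\<^bsub>C v\<^esub> m = \<one>\<^bsub>C v\<^esub>"
    proof (rule ccontr)
      assume a1: "?n1 \<otimes>\<^bsub>C v\<^esub> m \<noteq> \<one>\<^bsub>C v\<^esub>"
      have "\<exists>q k. pr x v (dl v w2) = q @ [(v, k)]" if xv: "(x, v) \<notin> E" for x
      proof -
        have "fv v w1 m (pr x v w1) = pr x v (dl v w1) @ [(v, ?n1 \<otimes>\<^bsub>C v\<^esub> m)]" using fv1[OF xv] a1 by simp
        moreover have "fv v w2 m (pr x v w2) = pr x v (dl v w2)" using fv2[OF xv] a2 by simp
        ultimately have "pr x v (dl v w2) = pr x v (dl v w1) @ [(v, ?n1 \<otimes>\<^bsub>C v\<^esub> m)]" using H[OF xv] by simp
        then show ?thesis by blast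
      qed
      then show False using no_ext_after[OF R2 e2] by blast
    qed
  qed
  then show ?thesis using e2 by simp
qed

lemma rmul_rcancel:
  assumes R1: "Rd w1" and R2: "Rd w2" and l: "(v, m) \<in> L"
    and P: "peq (rmul w1 (v, m)) (rmul w2 (v, m))"
  shows "peq w1 w2"
proof (cases "m = \<one>\<^bsub>C v\<^esub>")
  case True
  have vV: "v \<in> V" using l by simp
  show ?thesis using rmul_unit[OF R1 vV] rmul_unit[OF R2 vV] P True by (meson peq_sym peq_trans)
next
  case m1: False
  have vV: "v \<in> V" and mC: "m \<in> carrier (C v)" using l by auto
  have H: "fv v w1 m (pr x v w1) = fv v w2 m (pr x v w2)" if xv: "(x, v) \<notin> E" for x
  proof -
    have "pr x v (rmul w1 (v, m)) = pr x v (rmul w2 (v, m))" using P xv unfolding peq_def by blast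
    then show ?thesis using pr_rmul_v[OF xv] by simp
  qed
  have H': "fv v w2 m (pr x v w2) = fv v w1 m (pr x v w1)" if "(x, v) \<notin> E" for x
    using H[OF that] by simp
  have main: "pr x v w1 = pr x v w2" if xv: "(x, v) \<notin> E" for x
  proof (cases "ext v w1")
    case e1: True
    obtain e2: "ext v w2" and eq: "lastn v w1 \<otimes>\<^bsub>C v\<^esub> m = \<one>\<^bsub>C v\<^esub> \<longleftrightarrow> lastn v w2 \<otimes>\<^bsub>C v\<^esub> m = \<one>\<^bsub>C v\<^esub>"
      using rc_mixed[OF R1 R2 e1 l m1 H] by blast
    note ln1 = Rd_lastn[OF R1 e1] and ln2 = Rd_lastn[OF R2 e2]
    have p1: "pr x v w1 = pr x v (dl v w1) @ [(v, lastn v w1)]" using last_pr[OF e1 xv] .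
    have p2: "pr x v w2 = pr x v (dl v w2) @ [(v, lastn v w2)]" using last_pr[OF e2 xv] .
    have h: "fv v w1 m (pr x v w1) = fv v w2 m (pr x v w2)" using H[OF xv] .
    show ?thesis
    proof (cases "lastn v w1 \<otimes>\<^bsub>C v\<^esub> m = \<one>\<^bsub>C v\<^esub>")
      case True
      then have "lastn v w1 \<otimes>\<^bsub>C v\<^esub> m = lastn v w2 \<otimes>\<^bsub>C v\<^esub> m" using eq by simp
      then have n: "lastn v w1 = lastn v w2" using rcancel[OF vV] ln1 ln2 mC by blast
      have "pr x v (dl v w1) = pr x v (dl v w2)" using h p1 p2 e1 e2 True eq by (simp add: fv_def)
      then show ?thesis using p1 p2 n by simp
    next
      case False
      then have "pr x v (dl v w1) @ [(v, lastn v w1 \<otimes>\<^bsub>C v\<^esub> m)] = pr x v (dl v w2) @ [(v, lastn v w2 \<otimes>\<^bsub>C v\<^esub> m)]"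
        using h p1 p2 e1 e2 eq by (simp add: fv_def)
      then have a: "pr x v (dl v w1) = pr x v (dl v w2)" and "lastn v w1 \<otimes>\<^bsub>C v\<^esub> m = lastn v w2 \<otimes>\<^bsub>C v\<^esub> m" by auto
      then have n: "lastn v w1 = lastn v w2" using rcancel[OF vV] ln1 ln2 mC by blast
      then show ?thesis using p1 p2 a by simp
    qed
  next
    case ne1: False
    have ne2: "\<not> ext v w2"
    proof
      assume e2: "ext v w2"
      then have "ext v w1" using rc_mixed[OF R2 R1 e2 l m1 H'] by blast
      then show False using ne1 by simp
    qed
    then show ?thesis using H[OF xv] ne1 m1 by (simp add: fv_def)
  qed
  show ?thesis unfolding peq_def
  proof (intro allI impI)
    fix a b assume ab: "(a, b) \<notin> E"
    have ba: "(b, a) \<notin> E" using ab symE' by blast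
    show "pr a b w1 = pr a b w2"
    proof (cases "v = b")
      case True then show ?thesis using main ab by simp
    next
      case F1: False
      show ?thesis
      proof (cases "v = a")
        case True then show ?thesis using main[of b] ba by (simp add: pr_comm[of a b])
      next
        case False
        then have "pr a b (rmul w1 (v, m)) = pr a b w1" "pr a b (rmul w2 (v, m)) = pr a b w2"
          using F1 pr_rmul_other by auto
        moreover have "pr a b (rmul w1 (v, m)) = pr a b (rmul w2 (v, m))" using P ab unfolding peq_def by blast
        ultimately show ?thesis by simp
      qed
    qed
  qed
qed

lemma F_rcancel: "Rd w1 \<Longrightarrow> Rd w2 \<Longrightarrow> z \<in> lists L \<Longrightarrow> peq (foldl rmul w1 z) (foldl rmul w2 z) \<Longrightarrow> peq w1 w2"
proof (induction z arbitrary: w1 w2)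
  case Nil then show ?case by simp
next
  case (Cons l z)
  obtain v m where l: "l = (v, m)" by (cases l)
  have "peq (rmul w1 l) (rmul w2 l)" using Cons.IH[of "rmul w1 l" "rmul w2 l"] Cons.prems Rd_rmul' by simp
  then show ?case using rmul_rcancel[of w1 w2 v m] Cons.prems l by simp
qed

lemma cong_rcancel:
  assumes "x \<in> lists L" "y \<in> lists L" "z \<in> lists L" "cong (x @ z) (y @ z)"
  shows "cong x y"
proof -
  have "peq (rnf (x @ z)) (rnf (y @ z))" using cong_peq assms(4) by simp
  then have "peq (foldl rmul (rnf x) z) (foldl rmul (rnf y) z)" by (simp add: rnf_app)
  then have "peq (rnf x) (rnf y)" using F_rcancel rnf_Rd assms by blast
  then show ?thesis using cong_iff assms by simp
qed

end


context gpl begin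

abbreviation M where "M \<equiv> graph_product V E C"
abbreviation cls where "cls \<equiv> gp_class V E C"

lemma carrier_M: "carrier M = cls ` lists L"
  by (simp add: graph_product_def)

lemma one_M: "\<one>\<^bsub>M\<^esub> = cls []"
  by (simp add: graph_product_def)

lemma cls_eq: "x \<in> lists L \<Longrightarrow> y \<in> lists L \<Longrightarrow> cls x = cls y \<longleftrightarrow> cong x y"
proof
  assume a: "x \<in> lists L" "y \<in> lists L" "cls x = cls y"
  have "x \<in> cls x" using a(1) cong_refl by (simp add: gp_class_def)
  then have "x \<in> cls y" using a(3) by simp
  then show "cong x y" by (simp add: gp_class_def)
next
  assume "cong x y"
  then show "cls x = cls y" unfolding gp_class_def by (auto intro: cong_trans cong_sym)
qed

lemma mult_M: "x \<in> lists L \<Longrightarrow> y \<in> lists L \<Longrightarrow> cls x \<otimes>\<^bsub>M\<^esub> cls y = cls (x @ y)"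
proof -
  assume a: "x \<in> lists L" "y \<in> lists L"
  have "(\<exists>x'\<in>cls x. \<exists>y'\<in>cls y. cong z (x' @ y')) \<longleftrightarrow> cong z (x @ y)" for z
  proof
    assume "\<exists>x'\<in>cls x. \<exists>y'\<in>cls y. cong z (x' @ y')"
    then obtain x' y' where "cong x' x" "cong y' y" "cong z (x' @ y')" by (auto simp: gp_class_def)
    then show "cong z (x @ y)" by (meson cong_app cong_trans)
  next
    assume "cong z (x @ y)"
    moreover have "x \<in> cls x" "y \<in> cls y" using a cong_refl by (auto simp: gp_class_def)
    ultimately show "\<exists>x'\<in>cls x. \<exists>y'\<in>cls y. cong z (x' @ y')" by blast
  qed
  then show ?thesis by (simp add: graph_product_def gp_class_def)
qed

lemma monoid_M: "monoid M"
proof (rule monoidI)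
  fix x y assume "x \<in> carrier M" "y \<in> carrier M"
  then obtain a b where "a \<in> lists L" "b \<in> lists L" "x = cls a" "y = cls b" by (auto simp: carrier_M)
  then show "x \<otimes>\<^bsub>M\<^esub> y \<in> carrier M" using mult_M[of a b] by (simp add: carrier_M)
next
  show "\<one>\<^bsub>M\<^esub> \<in> carrier M" by (auto simp: carrier_M one_M)
next
  fix x y z assume "x \<in> carrier M" "y \<in> carrier M" "z \<in> carrier M"
  then obtain a b c where "a \<in> lists L" "b \<in> lists L" "c \<in> lists L" "x = cls a" "y = cls b" "z = cls c"
    by (auto simp: carrier_M)
  then show "x \<otimes>\<^bsub>M\<^esub> y \<otimes>\<^bsub>M\<^esub> z = x \<otimes>\<^bsub>M\<^esub> (y \<otimes>\<^bsub>M\<^esub> z)"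
    using mult_M[of a b] mult_M[of b c] mult_M[of "a @ b" c] mult_M[of a "b @ c"] by simp
next
  fix x assume "x \<in> carrier M"
  then obtain a where "a \<in> lists L" "x = cls a" by (auto simp: carrier_M)
  then show "\<one>\<^bsub>M\<^esub> \<otimes>\<^bsub>M\<^esub> x = x" using mult_M[of "[]" a] by (simp add: one_M)
next
  fix x assume "x \<in> carrier M"
  then obtain a where "a \<in> lists L" "x = cls a" by (auto simp: carrier_M)
  then show "x \<otimes>\<^bsub>M\<^esub> \<one>\<^bsub>M\<^esub> = x" using mult_M[of a "[]"] by (simp add: one_M)
qed

lemma rc_M: "right_cancellative M"
  unfolding right_cancellative_def
proof (intro ballI impI)
  fix a b c assume "a \<in> carrier M" "b \<in> carrier M" "c \<in> carrier M" and e: "a \<otimes>\<^bsub>M\<^esub> c = b \<otimes>\<^bsub>M\<^esub> c"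
  then obtain x y z where xyz: "x \<in> lists L" "y \<in> lists L" "z \<in> lists L" "a = cls x" "b = cls y" "c = cls z"
    by (auto simp: carrier_M)
  then have "cls (x @ z) = cls (y @ z)" using e by (simp add: mult_M)
  then have "cong (x @ z) (y @ z)" using xyz by (simp add: cls_eq)
  then have "cong x y" using cong_rcancel xyz by blast
  then show "a = b" using xyz cls_eq by simp
qed

definition WI :: "('v \<times> 'a) list \<Rightarrow> ('v \<times> 'a) list set" where
  "WI y = {z. z \<in> lists L \<and> (\<exists>c\<in>lists L. cong z (c @ y))}"

lemma WI_sat: "z \<in> WI y \<Longrightarrow> cong z z' \<Longrightarrow> z' \<in> WI y"
proof -
  assume a: "z \<in> WI y" "cong z z'"
  then obtain c where c: "c \<in> lists L" "cong z (c @ y)" by (auto simp: WI_def)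
  have "cong z' (c @ y)" using cong_trans[OF cong_sym[OF a(2)] c(2)] .
  moreover have "z' \<in> lists L" using cong_lists[OF a(2)] by simp
  ultimately show ?thesis using c(1) by (auto simp: WI_def)
qed

lemma WI_cong: "cong x y \<Longrightarrow> WI x = WI y"
proof -
  assume xy: "cong x y"
  have l: "x \<in> lists L" "y \<in> lists L" using cong_lists[OF xy] by auto
  have cc: "cong (c @ x) (c @ y)" if "c \<in> lists L" for c using cong_app_left[OF xy that] .
  show ?thesis
  proof
    show "WI x \<subseteq> WI y"
    proof
      fix z assume "z \<in> WI x"
      then obtain c where c: "c \<in> lists L" "cong z (c @ x)" "z \<in> lists L" by (auto simp: WI_def)
      then have "cong z (c @ y)" using cong_trans[OF c(2) cc[OF c(1)]] by simp
      then show "z \<in> WI y" using c by (auto simp: WI_def)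
    qed
  next
    show "WI y \<subseteq> WI x"
    proof
      fix z assume "z \<in> WI y"
      then obtain c where c: "c \<in> lists L" "cong z (c @ y)" "z \<in> lists L" by (auto simp: WI_def)
      then have "cong z (c @ x)" using cong_trans[OF c(2) cong_sym[OF cc[OF c(1)]]] by simp
      then show "z \<in> WI x" using c by (auto simp: WI_def)
    qed
  qed
qed

lemma PLI_M: "y \<in> lists L \<Longrightarrow> principal_left_ideal M (cls y) = cls ` WI y"
proof -
  assume y: "y \<in> lists L"
  show ?thesis
  proof
    show "principal_left_ideal M (cls y) \<subseteq> cls ` WI y"
    proof
      fix z assume "z \<in> principal_left_ideal M (cls y)"
      then obtain c where c: "c \<in> lists L" "z = cls c \<otimes>\<^bsub>M\<^esub> cls y"
        by (auto simp: principal_left_ideal_def carrier_M)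
      then have "z = cls (c @ y)" using y by (simp add: mult_M)
      moreover have "c @ y \<in> lists L" using c y by simp
      then have "c @ y \<in> WI y" using c cong_refl[of "c @ y"] unfolding WI_def by blast
      ultimately show "z \<in> cls ` WI y" by blast
    qed
  next
    show "cls ` WI y \<subseteq> principal_left_ideal M (cls y)"
    proof
      fix z assume "z \<in> cls ` WI y"
      then obtain z0 c where z: "z = cls z0" "z0 \<in> lists L" "c \<in> lists L" "cong z0 (c @ y)"
        by (auto simp: WI_def)
      then have "z = cls (c @ y)" using cls_eq y by simp
      also have "\<dots> = cls c \<otimes>\<^bsub>M\<^esub> cls y" using z y by (simp add: mult_M)
      finally show "z \<in> principal_left_ideal M (cls y)"
        using z by (auto simp: principal_left_ideal_def carrier_M)
    qed
  qed
qed

lemma WI_lists: "WI y \<subseteq> lists L"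
  by (auto simp: WI_def)

lemma img_inter:
  assumes "WI a \<inter> WI b = S"
  shows "cls ` WI a \<inter> cls ` WI b = cls ` S"
proof
  show "cls ` WI a \<inter> cls ` WI b \<subseteq> cls ` S"
  proof
    fix z assume "z \<in> cls ` WI a \<inter> cls ` WI b"
    then obtain p q where p: "p \<in> WI a" "q \<in> WI b" "z = cls p" "z = cls q" by blast
    have "p \<in> lists L" "q \<in> lists L" using p WI_lists by auto
    moreover have "cls p = cls q" using p by simp
    ultimately have "cong p q" using cls_eq[of p q] by simp
    then have "p \<in> WI b" using p WI_sat cong_sym by blast
    then show "z \<in> cls ` S" using p assms by blast
  qed
next
  show "cls ` S \<subseteq> cls ` WI a \<inter> cls ` WI b" using assms by blast
qed

lemma LCM_from_words:
  assumes W: "\<And>a b. a \<in> lists L \<Longrightarrow> b \<in> lists L \<Longrightarrow>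
                WI a \<inter> WI b = {} \<or> (\<exists>m\<in>lists L. WI a \<inter> WI b = WI m)"
  shows "left_LCM_monoid M"
  unfolding left_LCM_monoid_def
proof (intro conjI ballI)
  show "monoid M" by (rule monoid_M)
  show "right_cancellative M" by (rule rc_M)
next
  fix A B assume "A \<in> carrier M" "B \<in> carrier M"
  then obtain a b where ab: "a \<in> lists L" "b \<in> lists L" "A = cls a" "B = cls b" by (auto simp: carrier_M)
  have pa: "principal_left_ideal M A = cls ` WI a" "principal_left_ideal M B = cls ` WI b"
    using ab PLI_M by auto
  from W[OF ab(1,2)] show "principal_left_ideal M A \<inter> principal_left_ideal M B = {} \<or>
      (\<exists>m\<in>carrier M. principal_left_ideal M A \<inter> principal_left_ideal M B = principal_left_ideal M m)"
  proof
    assume "WI a \<inter> WI b = {}"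
    then have "cls ` WI a \<inter> cls ` WI b = cls ` {}" by (rule img_inter)
    then show ?thesis using pa by simp
  next
    assume "\<exists>m\<in>lists L. WI a \<inter> WI b = WI m"
    then obtain m where m: "m \<in> lists L" "WI a \<inter> WI b = WI m" by blast
    then have "cls ` WI a \<inter> cls ` WI b = cls ` WI m" by (intro img_inter) simp
    then have "principal_left_ideal M A \<inter> principal_left_ideal M B = principal_left_ideal M (cls m)"
      using pa PLI_M[OF m(1)] by simp
    moreover have "cls m \<in> carrier M" using m by (simp add: carrier_M)
    ultimately show ?thesis by blast
  qed
qed

end


context gpl begin

definition tau :: "'v \<Rightarrow> ('v \<times> 'a) list \<Rightarrow> 'a" where
  "tau v w = (if ext v w then lastn v w else \<one>\<^bsub>C v\<^esub>)"

lemma tau_peq: "peq w w' \<Longrightarrow> tau v w = tau v w'"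
  by (simp add: tau_def ext_peq[of w w'] lastn_peq[of w w'])

lemma tau_carrier: "Rd w \<Longrightarrow> v \<in> V \<Longrightarrow> tau v w \<in> carrier (C v)"
  using Rd_lastn monoid.one_closed[OF mon] by (auto simp: tau_def)

lemma tau_rmul:
  assumes R: "Rd w" and l: "(v, t) \<in> L"
  shows "tau v (rmul w (v, t)) = tau v w \<otimes>\<^bsub>C v\<^esub> t"
proof -
  have vV: "v \<in> V" and tC: "t \<in> carrier (C v)" using l by auto
  interpret Cv: monoid "C v" using mon[OF vV] .
  show ?thesis
  proof (cases "ext v w")
    case True
    note dl = Rd_dl[OF R True]
    show ?thesis
    proof (cases "lastn v w \<otimes>\<^bsub>C v\<^esub> t = \<one>\<^bsub>C v\<^esub>")
      case True then show ?thesis using \<open>ext v w\<close> dl by (simp add: rmul_simp tau_def)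
    next
      case False then show ?thesis using \<open>ext v w\<close> by (simp add: rmul_simp tau_def)
    qed
  next
    case False
    then show ?thesis using tC by (simp add: rmul_simp tau_def)
  qed
qed

lemma tau_other: "(u, v) \<in> E \<Longrightarrow> tau v (rmul w (u, m)) = tau v w"
  using ext_rmul_other by (simp add: tau_def)

lemma tau_F_other: "\<forall>y\<in>set x. (fst y, v) \<in> E \<Longrightarrow> tau v (foldl rmul w x) = tau v w"
proof (induction x arbitrary: w)
  case Nil then show ?case by simp
next
  case (Cons l x)
  obtain u m where l: "l = (u, m)" by (cases l)
  have "tau v (foldl rmul (rmul w l) x) = tau v (rmul w l)" using Cons by simp
  also have "\<dots> = tau v w" using tau_other[of u v w m] Cons.prems l by simp
  finally show ?case by simp
qed

definition hat :: "'v \<Rightarrow> ('v \<times> 'a) list \<Rightarrow> ('v \<times> 'a) list" where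
  "hat v w = (if ext v w then dl v w else w)"

lemma hat_cong:
  assumes R: "Rd w" and vV: "v \<in> V"
  shows "cong w (hat v w @ [(v, tau v w)])"
proof (cases "ext v w")
  case True
  obtain a n b where w: "w = a @ [(v, n)] @ b" and b: "\<forall>y\<in>set b. (fst y, v) \<in> E"
    and d: "dl v w = a @ b" and ln: "lastn v w = n" using ext_D[OF True] by blast
  have wl: "w \<in> lists L" using R by (simp add: Rd_def)
  have "cong (a @ [(v, n)] @ b) (a @ b @ [(v, n)])"
    using wl w b symE' by (intro move_cong) auto
  then show ?thesis using True w d ln by (simp add: hat_def tau_def)
next
  case False
  have wl: "w \<in> lists L" using R by (simp add: Rd_def)
  have "gp_basic V E C [(v, \<one>\<^bsub>C v\<^esub>)] []" using vV by (rule gp_basic.unit)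
  then have "cong (w @ [(v, \<one>\<^bsub>C v\<^esub>)] @ []) (w @ [] @ [])" using wl by (intro cong_basic) auto
  then show ?thesis using False by (simp add: hat_def tau_def cong_sym)
qed

definition T :: "'v \<Rightarrow> ('v \<times> 'a) list \<Rightarrow> 'a" where
  "T v z = tau v (rnf z)"

lemma T_cong: "cong z z' \<Longrightarrow> T v z = T v z'"
  unfolding T_def by (rule tau_peq) (rule cong_peq)

lemma T_snoc: "z \<in> lists L \<Longrightarrow> (v, t) \<in> L \<Longrightarrow> T v (z @ [(v, t)]) = T v z \<otimes>\<^bsub>C v\<^esub> t"
  unfolding T_def using tau_rmul[OF rnf_Rd] by (simp add: rnf_app)

lemma T_other: "\<forall>y\<in>set x. (fst y, v) \<in> E \<Longrightarrow> T v (z @ x) = T v z"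
  unfolding T_def by (simp add: rnf_app tau_F_other)

lemma T_carrier: "z \<in> lists L \<Longrightarrow> v \<in> V \<Longrightarrow> T v z \<in> carrier (C v)"
  unfolding T_def using tau_carrier rnf_Rd by blast

lemma WI_letter:
  assumes l: "(v, b) \<in> L"
  shows "z \<in> WI [(v, b)] \<longleftrightarrow> z \<in> lists L \<and> T v z \<in> principal_left_ideal (C v) b"
proof
  assume "z \<in> WI [(v, b)]"
  then obtain c where c: "c \<in> lists L" "cong z (c @ [(v, b)])" "z \<in> lists L" by (auto simp: WI_def)
  have "T v z = T v c \<otimes>\<^bsub>C v\<^esub> b" using T_cong[OF c(2)] T_snoc[OF c(1) l] by simp
  moreover have "T v c \<in> carrier (C v)" using T_carrier c l by simp
  ultimately show "z \<in> lists L \<and> T v z \<in> principal_left_ideal (C v) b"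
    using c by (auto simp: principal_left_ideal_def)
next
  assume a: "z \<in> lists L \<and> T v z \<in> principal_left_ideal (C v) b"
  then obtain c where c: "c \<in> carrier (C v)" "T v z = c \<otimes>\<^bsub>C v\<^esub> b" by (auto simp: principal_left_ideal_def)
  have vV: "v \<in> V" and bC: "b \<in> carrier (C v)" using l by auto
  let ?r = "rnf z"
  have R: "Rd ?r" using rnf_Rd a by simp
  have hl: "hat v ?r \<in> lists L" using R Rd_dl[of ?r v] by (auto simp: hat_def Rd_def)
  have 1: "cong z ?r" using rnf_cong a cong_sym by blast
  have 2: "cong ?r (hat v ?r @ [(v, c \<otimes>\<^bsub>C v\<^esub> b)])" using hat_cong[OF R vV] c by (simp add: T_def)
  have "gp_basic V E C [(v, c), (v, b)] [(v, c \<otimes>\<^bsub>C v\<^esub> b)]" using vV c(1) bC by (rule gp_basic.mult)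
  then have "cong (hat v ?r @ [(v, c), (v, b)] @ []) (hat v ?r @ [(v, c \<otimes>\<^bsub>C v\<^esub> b)] @ [])"
    using hl by (intro cong_basic) auto
  then have 3: "cong (hat v ?r @ [(v, c), (v, b)]) (hat v ?r @ [(v, c \<otimes>\<^bsub>C v\<^esub> b)])" by simp
  have "cong z ((hat v ?r @ [(v, c)]) @ [(v, b)])" using cong_trans[OF cong_trans[OF 1 2] cong_sym[OF 3]] by simp
  moreover have "hat v ?r @ [(v, c)] \<in> lists L" using hl c vV by simp
  ultimately show "z \<in> WI [(v, b)]" using a unfolding WI_def by blast
qed

definition NoLU :: "('v \<times> 'a) list \<Rightarrow> bool" where
  "NoLU x \<longleftrightarrow> (\<forall>p l q. x = p @ [l] @ q \<longrightarrow> (\<forall>y\<in>set p. (fst y, fst l) \<in> E) \<longrightarrow> snd l \<notin> Units (C (fst l)))"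

lemma Rd_prefix:
  assumes "Rd (x @ y)" shows "Rd x"
proof -
  have "\<not> ext (fst l) p" if "x = p @ [l] @ q" for p l q
  proof -
    have "x @ y = p @ [l] @ (q @ y)" using that by simp
    then show ?thesis using assms unfolding Rd_def by blast
  qed
  moreover have "x \<in> lists L" using assms by (simp add: Rd_def)
  moreover have "\<forall>z\<in>set x. snd z \<noteq> \<one>\<^bsub>C (fst z)\<^esub>" using assms by (simp add: Rd_def)
  ultimately show ?thesis unfolding Rd_def by blast
qed

lemma NoLU_prefix:
  assumes "NoLU (x @ y)" shows "NoLU x"
  unfolding NoLU_def
proof (intro allI impI)
  fix p l q assume "x = p @ [l] @ q" "\<forall>y\<in>set p. (fst y, fst l) \<in> E"
  moreover have "x @ y = p @ [l] @ (q @ y)" using calculation by simp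
  ultimately show "snd l \<notin> Units (C (fst l))" using assms unfolding NoLU_def by blast
qed

lemma unit_lemma:
  assumes vV: "v \<in> V" and pC: "p \<in> carrier (C v)" and nC: "n \<in> carrier (C v)"
    and e: "p \<otimes>\<^bsub>C v\<^esub> n = \<one>\<^bsub>C v\<^esub>"
  shows "n \<in> Units (C v)"
proof -
  interpret Cv: monoid "C v" using mon[OF vV] .
  have eq: "(n \<otimes>\<^bsub>C v\<^esub> p) \<otimes>\<^bsub>C v\<^esub> n = \<one>\<^bsub>C v\<^esub> \<otimes>\<^bsub>C v\<^esub> n"
    using e pC nC by (simp add: Cv.m_assoc)
  have "n \<otimes>\<^bsub>C v\<^esub> p \<in> carrier (C v)" using pC nC by simp
  from rcancel[OF vV this Cv.one_closed nC eq] have "n \<otimes>\<^bsub>C v\<^esub> p = \<one>\<^bsub>C v\<^esub>" .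
  then show ?thesis using e pC nC unfolding Units_def by blast
qed

lemma lastn_carrier:
  assumes "w \<in> lists L" "ext v w" shows "lastn v w \<in> carrier (C v)"
proof -
  obtain a n b where w: "w = a @ [(v, n)] @ b" and ln: "lastn v w = n" using ext_D[OF assms(2)] by blast
  then show ?thesis using assms(1) by simp
qed

lemma Lp:
  assumes "Rd w" "Rd x" "NoLU x"
  shows "\<exists>w' x'. peq (foldl rmul w x) (w' @ x') \<and> map fst x' = map fst x \<and> w' \<in> lists L"
  using assms(2,3)
proof (induction x rule: rev_induct)
  case Nil
  then show ?case using assms(1) Rd_lists by (intro exI[of _ w] exI[of _ "[]"]) simp
next
  case (snoc l x)
  have Rx: "Rd x" using Rd_prefix snoc.prems by blast
  have Nx: "NoLU x" using NoLU_prefix snoc.prems by blast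
  obtain w' x' where IH: "peq (foldl rmul w x) (w' @ x')" "map fst x' = map fst x" "w' \<in> lists L"
    using snoc.IH[OF Rx Nx] by blast
  obtain u n where l: "l = (u, n)" by (cases l)
  have RR: "Rd (x @ [(u, n)])" using snoc.prems l by simp
  have nex: "\<not> ext u x" using RR unfolding Rd_def by force
  have n1: "n \<noteq> \<one>\<^bsub>C u\<^esub>" and lL: "(u, n) \<in> L" using RR unfolding Rd_def by auto
  have P: "peq (foldl rmul w (x @ [l])) (rmul (w' @ x') (u, n))" using rmul_peq[OF IH(1)] l by simp
  have sx: "set (map fst x') = set (map fst x)" using IH(2) by simp
  show ?case
  proof (cases "\<exists>y\<in>set x. (fst y, u) \<notin> E")
    case True
    then have "\<exists>y\<in>set (map fst x'). (y, u) \<notin> E" using sx by auto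
    then have "ext u (w' @ x') = ext u x'" unfolding ext_def using extv_app_dep by simp
    also have "\<dots> = ext u x" using IH(2) by (rule ext_map_fst)
    finally have "\<not> ext u (w' @ x')" using nex by simp
    then have "rmul (w' @ x') (u, n) = w' @ (x' @ [(u, n)])" using n1 by (simp add: rmul_simp)
    then show ?thesis using P IH l by (intro exI[of _ w'] exI[of _ "x' @ [(u, n)]"]) simp
  next
    case False
    then have allE: "\<forall>y\<in>set (map fst x'). (y, u) \<in> E" using sx by auto
    have xe: "x @ [l] = x @ [l] @ []" by simp
    have "\<forall>y\<in>set x. (fst y, fst l) \<in> E" using False l by auto
    then have "snd l \<notin> Units (C (fst l))" using snoc.prems(2) xe unfolding NoLU_def by blast
    then have nU: "n \<notin> Units (C u)" using l by simp
    have e: "ext u (w' @ x') = ext u w'" unfolding ext_def using extv_app_indep allE by simp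
    show ?thesis
    proof (cases "ext u w'")
      case False
      then have "rmul (w' @ x') (u, n) = w' @ (x' @ [(u, n)])" using n1 e by (simp add: rmul_simp)
      then show ?thesis using P IH l by (intro exI[of _ w'] exI[of _ "x' @ [(u, n)]"]) simp
    next
      case True
      have nou: "\<forall>y\<in>set x'. fst y \<noteq> u" using allE by auto
      have "filter (\<lambda>y. fst y = u) x' = []" using nou by (auto simp: filter_empty_conv)
      then have ln: "lastn u (w' @ x') = lastn u w'" by (simp add: lastn_def)
      have pC: "lastn u w' \<in> carrier (C u)" using lastn_carrier[OF IH(3) True] .
      have uV: "u \<in> V" and nC: "n \<in> carrier (C u)" using lL by auto
      have pn: "lastn u w' \<otimes>\<^bsub>C u\<^esub> n \<noteq> \<one>\<^bsub>C u\<^esub>" using unit_lemma[OF uV pC nC] nU by blast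
      have dl: "dl u (w' @ x') = dl u w' @ x'" using dl_app_nov nou by blast
      have "rmul (w' @ x') (u, n) = dl u w' @ (x' @ [(u, lastn u w' \<otimes>\<^bsub>C u\<^esub> n)])"
        using e True ln pn dl by (simp add: rmul_simp)
      moreover have "dl u w' \<in> lists L"
      proof -
        obtain a k b where "w' = a @ [(u, k)] @ b" "dl u w' = a @ b" using ext_D[OF True] by blast
        then show ?thesis using IH(3) by simp
      qed
      ultimately show ?thesis using P IH l
        by (intro exI[of _ "dl u w'"] exI[of _ "x' @ [(u, lastn u w' \<otimes>\<^bsub>C u\<^esub> n)]"]) simp
    qed
  qed
qed

lemma blocked:
  assumes "Rd r" "NoLU r" "\<not> ext v r" "\<exists>y\<in>set r. (fst y, v) \<notin> E" "Rd w"
  shows "tau v (foldl rmul w r) = \<one>\<^bsub>C v\<^esub>"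
proof -
  obtain w' x' where W: "peq (foldl rmul w r) (w' @ x')" "map fst x' = map fst r"
    using Lp[OF assms(5,1,2)] by blast
  obtain y where y: "y \<in> set r" "(fst y, v) \<notin> E" using assms(4) by blast
  have "fst y \<in> set (map fst x')" using y W(2) by (metis image_eqI list.set_map)
  then have "\<exists>y\<in>set (map fst x'). (y, v) \<notin> E" using y by blast
  then have "ext v (w' @ x') = ext v x'" unfolding ext_def using extv_app_dep by simp
  also have "\<dots> = ext v r" using W(2) by (rule ext_map_fst)
  finally have "\<not> ext v (foldl rmul w r)" using ext_peq[OF W(1)] assms(3) by simp
  then show ?thesis by (simp add: tau_def)
qed

end


context gpl begin

lemma mem_WI_self: "m \<in> lists L \<Longrightarrow> m \<in> WI m"
  unfolding WI_def using cong_refl[of m] by (intro CollectI conjI bexI[of _ "[]"]) auto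

lemma WI_ext:
  assumes p: "p \<in> lists L" and l: "l \<in> L"
  shows "{z. \<exists>w\<in>WI p. cong z (w @ [l])} = WI (p @ [l])"
proof
  show "{z. \<exists>w\<in>WI p. cong z (w @ [l])} \<subseteq> WI (p @ [l])"
  proof
    fix z assume "z \<in> {z. \<exists>w\<in>WI p. cong z (w @ [l])}"
    then obtain w c where w: "cong z (w @ [l])" "c \<in> lists L" "cong w (c @ p)" by (auto simp: WI_def)
    have "cong (w @ [l]) ((c @ p) @ [l])" using cong_app_right[OF w(3)] l by simp
    then have "cong z (c @ p @ [l])" using cong_trans[OF w(1)] by simp
    moreover have "z \<in> lists L" using cong_lists[OF w(1)] by simp
    ultimately show "z \<in> WI (p @ [l])" using w(2) unfolding WI_def by blast
  qed
next
  show "WI (p @ [l]) \<subseteq> {z. \<exists>w\<in>WI p. cong z (w @ [l])}"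
  proof
    fix z assume "z \<in> WI (p @ [l])"
    then obtain c where c: "c \<in> lists L" "cong z (c @ p @ [l])" by (auto simp: WI_def)
    have "c @ p \<in> WI p" using c p cong_refl[of "c @ p"] unfolding WI_def by auto
    moreover have "cong z ((c @ p) @ [l])" using c by simp
    ultimately show "z \<in> {z. \<exists>w\<in>WI p. cong z (w @ [l])}" by blast
  qed
qed

lemma WI_unit_Cons:
  assumes s: "s \<in> lists L" and l: "(u, g) \<in> L" and g: "g \<in> Units (C u)"
  shows "WI ((u, g) # s) = WI s"
proof
  show "WI ((u, g) # s) \<subseteq> WI s"
  proof
    fix z assume "z \<in> WI ((u, g) # s)"
    then obtain c where c: "c \<in> lists L" "cong z (c @ (u, g) # s)" "z \<in> lists L" by (auto simp: WI_def)
    have "c @ [(u, g)] \<in> lists L" using c l by simp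
    moreover have "cong z ((c @ [(u, g)]) @ s)" using c by simp
    ultimately show "z \<in> WI s" using c unfolding WI_def by blast
  qed
next
  show "WI s \<subseteq> WI ((u, g) # s)"
  proof
    fix z assume "z \<in> WI s"
    then obtain c where c: "c \<in> lists L" "cong z (c @ s)" "z \<in> lists L" by (auto simp: WI_def)
    have uV: "u \<in> V" and gC: "g \<in> carrier (C u)" using l by auto
    interpret Cu: monoid "C u" using mon[OF uV] .
    obtain g' where g': "g' \<in> carrier (C u)" "g' \<otimes>\<^bsub>C u\<^esub> g = \<one>\<^bsub>C u\<^esub>"
      using Cu.Units_l_inv_ex[OF g] by blast
    have "gp_basic V E C [(u, g'), (u, g)] [(u, g' \<otimes>\<^bsub>C u\<^esub> g)]" using uV g'(1) gC by (rule gp_basic.mult)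
    then have 1: "cong (c @ [(u, g'), (u, g)] @ s) (c @ [(u, \<one>\<^bsub>C u\<^esub>)] @ s)"
      using cong_basic[OF c(1) s, of "[(u, g'), (u, g)]" "[(u, g' \<otimes>\<^bsub>C u\<^esub> g)]"] g'(2) by simp
    have "gp_basic V E C [(u, \<one>\<^bsub>C u\<^esub>)] []" using uV by (rule gp_basic.unit)
    then have "cong (c @ [(u, \<one>\<^bsub>C u\<^esub>)] @ s) (c @ [] @ s)" using cong_basic[OF c(1) s] by blast
    then have 2: "cong (c @ [(u, \<one>\<^bsub>C u\<^esub>)] @ s) (c @ s)" by simp
    have 3: "cong z (c @ [(u, g'), (u, g)] @ s)"
      using cong_trans[OF c(2) cong_sym[OF cong_trans[OF 1 2]]] by simp
    have "c @ [(u, g')] \<in> lists L" using c g' uV by simp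
    moreover have "cong z ((c @ [(u, g')]) @ (u, g) # s)" using 3 by simp
    ultimately show "z \<in> WI ((u, g) # s)" using c unfolding WI_def by blast
  qed
qed

lemma single:
  "x \<in> lists L \<Longrightarrow> (v, b) \<in> L \<Longrightarrow>
     WI x \<inter> WI [(v, b)] = {} \<or> (\<exists>m\<in>lists L. WI x \<inter> WI [(v, b)] = WI m)"
proof (induction "length x" arbitrary: x b rule: less_induct)
  case less
  have xl: "x \<in> lists L" and l: "(v, b) \<in> L" using less.prems by auto
  have vV: "v \<in> V" and bC: "b \<in> carrier (C v)" using l by auto
  interpret Cv: monoid "C v" using mon[OF vV] .
  let ?PL = "principal_left_ideal (C v)"
  let ?r = "rnf x"
  have R: "Rd ?r" using rnf_Rd xl by simp
  have rl: "?r \<in> lists L" using R Rd_lists by simp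
  have WIr: "WI x = WI ?r" using WI_cong[OF rnf_cong[OF xl]] by simp
  have lr: "length ?r \<le> length x" by (rule length_rnf)
  show ?case
  proof (cases "ext v ?r")
    case True
    define t where "t = lastn v ?r"
    define xh where "xh = dl v ?r"
    have tC: "t \<in> carrier (C v)" using Rd_lastn[OF R True] t_def by simp
    have xhR: "Rd xh" using Rd_dl[OF R True] xh_def by simp
    have xhl: "xh \<in> lists L" using xhR Rd_lists by simp
    have len: "length xh < length x"
    proof -
      obtain a n c where "?r = a @ [(v, n)] @ c" "dl v ?r = a @ c" using ext_D[OF True] by blast
      then show ?thesis using lr xh_def by simp
    qed
    have cr: "cong ?r (xh @ [(v, t)])" using hat_cong[OF R vV] True t_def xh_def by (simp add: hat_def tau_def)
    have WIx: "WI x = WI (xh @ [(v, t)])" using WIr WI_cong[OF cr] by simp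
    have key: "z \<in> WI x \<inter> WI [(v, b)] \<longleftrightarrow>
        (\<exists>y\<in>WI xh. cong z (y @ [(v, t)]) \<and> T v y \<otimes>\<^bsub>C v\<^esub> t \<in> ?PL b)" for z
    proof
      assume z: "z \<in> WI x \<inter> WI [(v, b)]"
      then have "z \<in> WI (xh @ [(v, t)])" using WIx by simp
      then obtain c where c: "c \<in> lists L" "cong z (c @ xh @ [(v, t)])" by (auto simp: WI_def)
      have y: "c @ xh \<in> WI xh" using c xhl cong_refl[of "c @ xh"] unfolding WI_def by auto
      have "T v z = T v ((c @ xh) @ [(v, t)])" using T_cong[OF c(2)] by simp
      also have "\<dots> = T v (c @ xh) \<otimes>\<^bsub>C v\<^esub> t" by (rule T_snoc) (use c xhl vV tC in auto)
      finally have "T v (c @ xh) \<otimes>\<^bsub>C v\<^esub> t \<in> ?PL b" using z WI_letter[OF l] by simp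
      moreover have "cong z ((c @ xh) @ [(v, t)])" using c by simp
      ultimately show "\<exists>y\<in>WI xh. cong z (y @ [(v, t)]) \<and> T v y \<otimes>\<^bsub>C v\<^esub> t \<in> ?PL b" using y by blast
    next
      assume "\<exists>y\<in>WI xh. cong z (y @ [(v, t)]) \<and> T v y \<otimes>\<^bsub>C v\<^esub> t \<in> ?PL b"
      then obtain y where y: "y \<in> WI xh" "cong z (y @ [(v, t)])" "T v y \<otimes>\<^bsub>C v\<^esub> t \<in> ?PL b" by blast
      have "z \<in> WI (xh @ [(v, t)])" using WI_ext[OF xhl, of "(v, t)"] y vV tC by auto
      then have z1: "z \<in> WI x" using WIx by simp
      have yl: "y \<in> lists L" using y(1) by (auto simp: WI_def)
      have "T v z = T v y \<otimes>\<^bsub>C v\<^esub> t" using T_cong[OF y(2)] T_snoc[OF yl] vV tC by simp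
      then have "z \<in> WI [(v, b)]" using y(3) WI_letter[OF l] cong_lists[OF y(2)] by simp
      then show "z \<in> WI x \<inter> WI [(v, b)]" using z1 by simp
    qed
    have "?PL t \<inter> ?PL b = {} \<or> (\<exists>m\<in>carrier (C v). ?PL t \<inter> ?PL b = ?PL m)"
      using LCM vV tC bC unfolding left_LCM_monoid_def by blast
    then show ?thesis
    proof
      assume emp: "?PL t \<inter> ?PL b = {}"
      have "z \<notin> WI x \<inter> WI [(v, b)]" for z
      proof
        assume "z \<in> WI x \<inter> WI [(v, b)]"
        then obtain y where y: "y \<in> WI xh" "T v y \<otimes>\<^bsub>C v\<^esub> t \<in> ?PL b" using key by blast
        have "y \<in> lists L" using y(1) by (auto simp: WI_def)
        then have "T v y \<in> carrier (C v)" using T_carrier vV by simp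
        then have "T v y \<otimes>\<^bsub>C v\<^esub> t \<in> ?PL t" unfolding principal_left_ideal_def by blast
        then show False using emp y(2) by blast
      qed
      then show ?thesis by blast
    next
      assume "\<exists>m\<in>carrier (C v). ?PL t \<inter> ?PL b = ?PL m"
      then obtain ll where ll: "ll \<in> carrier (C v)" "?PL t \<inter> ?PL b = ?PL ll" by blast
      have "\<one>\<^bsub>C v\<^esub> \<otimes>\<^bsub>C v\<^esub> ll = ll" using ll(1) by simp
      then have "ll \<in> ?PL ll" unfolding principal_left_ideal_def using Cv.one_closed by force
      then have "ll \<in> ?PL t" using ll by blast
      then obtain q where q: "q \<in> carrier (C v)" "ll = q \<otimes>\<^bsub>C v\<^esub> t" unfolding principal_left_ideal_def by blast
      have eqv: "\<tau> \<otimes>\<^bsub>C v\<^esub> t \<in> ?PL b \<longleftrightarrow> \<tau> \<in> ?PL q" if tau: "\<tau> \<in> carrier (C v)" for \<tau>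
      proof
        assume a: "\<tau> \<otimes>\<^bsub>C v\<^esub> t \<in> ?PL b"
        have "\<tau> \<otimes>\<^bsub>C v\<^esub> t \<in> ?PL t" using tau unfolding principal_left_ideal_def by blast
        then have "\<tau> \<otimes>\<^bsub>C v\<^esub> t \<in> ?PL ll" using a ll by blast
        then obtain c where c: "c \<in> carrier (C v)" "\<tau> \<otimes>\<^bsub>C v\<^esub> t = c \<otimes>\<^bsub>C v\<^esub> ll"
          unfolding principal_left_ideal_def by blast
        then have eq: "\<tau> \<otimes>\<^bsub>C v\<^esub> t = (c \<otimes>\<^bsub>C v\<^esub> q) \<otimes>\<^bsub>C v\<^esub> t" using q tC by (simp add: Cv.m_assoc)
        have "c \<otimes>\<^bsub>C v\<^esub> q \<in> carrier (C v)" using c q by simp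
        from rcancel[OF vV tau this tC eq] have "\<tau> = c \<otimes>\<^bsub>C v\<^esub> q" .
        then show "\<tau> \<in> ?PL q" using c unfolding principal_left_ideal_def by blast
      next
        assume "\<tau> \<in> ?PL q"
        then obtain c where c: "c \<in> carrier (C v)" "\<tau> = c \<otimes>\<^bsub>C v\<^esub> q" unfolding principal_left_ideal_def by blast
        then have "\<tau> \<otimes>\<^bsub>C v\<^esub> t = c \<otimes>\<^bsub>C v\<^esub> ll" using q tC by (simp add: Cv.m_assoc)
        then have "\<tau> \<otimes>\<^bsub>C v\<^esub> t \<in> ?PL ll" using c unfolding principal_left_ideal_def by blast
        then show "\<tau> \<otimes>\<^bsub>C v\<^esub> t \<in> ?PL b" using ll by blast
      qed
      have lq: "(v, q) \<in> L" using vV q by simp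
      have key2: "WI x \<inter> WI [(v, b)] = {z. \<exists>y\<in>WI xh \<inter> WI [(v, q)]. cong z (y @ [(v, t)])}"
      proof (intro Set.set_eqI iffI)
        fix z assume "z \<in> WI x \<inter> WI [(v, b)]"
        then obtain y where y: "y \<in> WI xh" "cong z (y @ [(v, t)])" "T v y \<otimes>\<^bsub>C v\<^esub> t \<in> ?PL b" using key by blast
        have yl: "y \<in> lists L" using y(1) by (auto simp: WI_def)
        then have "T v y \<in> ?PL q" using eqv[OF T_carrier[OF yl vV]] y(3) by simp
        then have "y \<in> WI [(v, q)]" using WI_letter[OF lq] yl by simp
        then show "z \<in> {z. \<exists>y\<in>WI xh \<inter> WI [(v, q)]. cong z (y @ [(v, t)])}" using y by blast
      next
        fix z assume "z \<in> {z. \<exists>y\<in>WI xh \<inter> WI [(v, q)]. cong z (y @ [(v, t)])}"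
        then obtain y where y: "y \<in> WI xh" "y \<in> WI [(v, q)]" "cong z (y @ [(v, t)])" by blast
        have yl: "y \<in> lists L" using y(1) by (auto simp: WI_def)
        have "T v y \<in> ?PL q" using WI_letter[OF lq] y(2) by simp
        then have "T v y \<otimes>\<^bsub>C v\<^esub> t \<in> ?PL b" using eqv[OF T_carrier[OF yl vV]] by simp
        then show "z \<in> WI x \<inter> WI [(v, b)]" using key y by blast
      qed
      have "WI xh \<inter> WI [(v, q)] = {} \<or> (\<exists>m\<in>lists L. WI xh \<inter> WI [(v, q)] = WI m)"
        using less.hyps[OF len xhl lq] .
      then show ?thesis
      proof
        assume "WI xh \<inter> WI [(v, q)] = {}"
        then show ?thesis using key2 by simp
      next
        assume "\<exists>m\<in>lists L. WI xh \<inter> WI [(v, q)] = WI m"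
        then obtain p where p: "p \<in> lists L" "WI xh \<inter> WI [(v, q)] = WI p" by blast
        have "WI x \<inter> WI [(v, b)] = WI (p @ [(v, t)])" using key2 p WI_ext[OF p(1), of "(v, t)"] vV tC by simp
        moreover have "p @ [(v, t)] \<in> lists L" using p vV tC by simp
        ultimately show ?thesis by blast
      qed
    qed
  next
    case ne: False
    show ?thesis
    proof (cases "\<forall>y\<in>set ?r. (fst y, v) \<in> E")
      case allE: True
      have "WI x \<inter> WI [(v, b)] = WI ((v, b) # ?r)"
      proof (intro Set.set_eqI iffI)
        fix z assume z: "z \<in> WI x \<inter> WI [(v, b)]"
        then have "z \<in> WI ?r" using WIr by simp
        then obtain c where c: "c \<in> lists L" "cong z (c @ ?r)" by (auto simp: WI_def)
        have "T v z = T v (c @ ?r)" using T_cong[OF c(2)] .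
        also have "\<dots> = T v c" using T_other[OF allE] .
        finally have "T v c \<in> ?PL b" using z WI_letter[OF l] by simp
        then have "c \<in> WI [(v, b)]" using WI_letter[OF l] c by simp
        then obtain d where d: "d \<in> lists L" "cong c (d @ [(v, b)])" by (auto simp: WI_def)
        have "cong (c @ ?r) ((d @ [(v, b)]) @ ?r)" using cong_app_right[OF d(2) rl] .
        then have "cong z (d @ (v, b) # ?r)" using cong_trans[OF c(2)] by simp
        then show "z \<in> WI ((v, b) # ?r)" using d cong_lists[OF c(2)] unfolding WI_def by blast
      next
        fix z assume "z \<in> WI ((v, b) # ?r)"
        then obtain d where d: "d \<in> lists L" "cong z (d @ (v, b) # ?r)" "z \<in> lists L" by (auto simp: WI_def)
        have dv: "d @ [(v, b)] \<in> lists L" using d l by simp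
        have c2: "cong z ((d @ [(v, b)]) @ ?r)" using d by simp
        have "z \<in> WI ?r" using dv c2 d(3) unfolding WI_def by blast
        then have z1: "z \<in> WI x" using WIr by simp
        have "T v z = T v ((d @ [(v, b)]) @ ?r)" using T_cong[OF c2] .
        also have "\<dots> = T v (d @ [(v, b)])" using T_other[OF allE] .
        also have "\<dots> = T v d \<otimes>\<^bsub>C v\<^esub> b" using T_snoc[OF d(1) l] .
        finally have "T v z \<in> ?PL b" using T_carrier[OF d(1) vV] unfolding principal_left_ideal_def by blast
        then have "z \<in> WI [(v, b)]" using WI_letter[OF l] d(3) by simp
        then show "z \<in> WI x \<inter> WI [(v, b)]" using z1 by simp
      qed
      moreover have "(v, b) # ?r \<in> lists L" using l rl by simp
      ultimately show ?thesis by blast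
    next
      case nall: False
      show ?thesis
      proof (cases "NoLU ?r")
        case True
        have T1: "T v z = \<one>\<^bsub>C v\<^esub>" if z: "z \<in> WI x" for z
        proof -
          have "z \<in> WI ?r" using z WIr by simp
          then obtain c where c: "c \<in> lists L" "cong z (c @ ?r)" by (auto simp: WI_def)
          have "T v z = T v (c @ ?r)" using T_cong[OF c(2)] .
          also have "\<dots> = tau v (foldl rmul (rnf c) ?r)" by (simp add: T_def rnf_app)
          also have "\<dots> = \<one>\<^bsub>C v\<^esub>" using blocked[OF R True ne] nall rnf_Rd[OF c(1)] by blast
          finally show ?thesis .
        qed
        show ?thesis
        proof (cases "\<one>\<^bsub>C v\<^esub> \<in> ?PL b")
          case True
          have "WI x \<inter> WI [(v, b)] = WI x"
          proof (intro Set.set_eqI iffI)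
            fix z assume "z \<in> WI x"
            then show "z \<in> WI x \<inter> WI [(v, b)]" using T1 True WI_letter[OF l] by (auto simp: WI_def)
          qed simp
          then show ?thesis using xl by blast
        next
          case False
          have "WI x \<inter> WI [(v, b)] = {}" using T1 False WI_letter[OF l] by auto
          then show ?thesis by blast
        qed
      next
        case False
        then obtain p l' q where r: "?r = p @ [l'] @ q" and pE: "\<forall>y\<in>set p. (fst y, fst l') \<in> E"
          and u: "snd l' \<in> Units (C (fst l'))" unfolding NoLU_def by blast
        obtain u g where l': "l' = (u, g)" by (cases l')
        have pl: "p \<in> lists L" "q \<in> lists L" and lL: "(u, g) \<in> L" using rl r l' by auto
        have "cong ([] @ [(u, g)] @ p) ([] @ p @ [(u, g)])"
          using pl lL pE l' symE' by (intro move_cong) auto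
        then have "cong ([(u, g)] @ p) (p @ [(u, g)])" by simp
        then have "cong (([(u, g)] @ p) @ q) ((p @ [(u, g)]) @ q)" using cong_app_right[OF _ pl(2)] by blast
        then have c1: "cong ((u, g) # (p @ q)) ?r" using r l' by simp
        have "WI x = WI ((u, g) # (p @ q))" using WIr WI_cong[OF c1] by simp
        also have "\<dots> = WI (p @ q)" using WI_unit_Cons[of "p @ q" u g] pl lL u l' by simp
        finally have W: "WI x = WI (p @ q)" .
        have "length (p @ q) < length x" using lr r by simp
        then have "WI (p @ q) \<inter> WI [(v, b)] = {} \<or> (\<exists>m\<in>lists L. WI (p @ q) \<inter> WI [(v, b)] = WI m)"
          using less.hyps pl l by simp
        then show ?thesis using W by simp
      qed
    qed
  qed
qed

lemma WI_Nil: "WI [] = lists L"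
  unfolding WI_def using cong_refl by auto

lemma WI_snoc_inter:
  assumes a: "a \<in> lists L" and b: "b \<in> lists L" and l: "l \<in> L"
  shows "WI (a @ [l]) \<inter> WI (b @ [l]) = {z. \<exists>w\<in>WI a \<inter> WI b. cong z (w @ [l])}"
proof (rule Set.set_eqI, rule iffI)
  fix z assume "z \<in> WI (a @ [l]) \<inter> WI (b @ [l])"
  then obtain c d where c: "c \<in> lists L" "cong z (c @ a @ [l])" and d: "d \<in> lists L" "cong z (d @ b @ [l])"
    by (auto simp: WI_def)
  have "cong ((c @ a) @ [l]) ((d @ b) @ [l])" using cong_trans[OF cong_sym[OF c(2)] d(2)] by simp
  then have cd: "cong (c @ a) (d @ b)" using cong_rcancel[of "c @ a" "d @ b" "[l]"] c d a b l by simp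
  have "c @ a \<in> WI a" using c a cong_refl[of "c @ a"] unfolding WI_def by auto
  moreover have "c @ a \<in> WI b" using cd d cong_lists[OF cd] unfolding WI_def by blast
  moreover have "cong z ((c @ a) @ [l])" using c by simp
  ultimately show "z \<in> {z. \<exists>w\<in>WI a \<inter> WI b. cong z (w @ [l])}" by blast
next
  fix z assume "z \<in> {z. \<exists>w\<in>WI a \<inter> WI b. cong z (w @ [l])}"
  then obtain w where w: "w \<in> WI a" "w \<in> WI b" "cong z (w @ [l])" by blast
  have "z \<in> WI (a @ [l])" using WI_ext[OF a l] w by blast
  moreover have "z \<in> WI (b @ [l])" using WI_ext[OF b l] w by blast
  ultimately show "z \<in> WI (a @ [l]) \<inter> WI (b @ [l])" by simp
qed

lemma general:
  "y \<in> lists L \<Longrightarrow> x \<in> lists L \<Longrightarrow> WI x \<inter> WI y = {} \<or> (\<exists>m\<in>lists L. WI x \<inter> WI y = WI m)"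
proof (induction y arbitrary: x rule: rev_induct)
  case Nil
  have "WI x \<inter> WI [] = WI x" using WI_Nil WI_lists by auto
  then show ?case using Nil by blast
next
  case (snoc l y0)
  obtain v b where l: "l = (v, b)" by (cases l)
  have y0l: "y0 \<in> lists L" and lL: "l \<in> L" using snoc by auto
  have sub: "WI (y0 @ [l]) \<subseteq> WI [l]"
  proof
    fix z assume "z \<in> WI (y0 @ [l])"
    then obtain c where "c \<in> lists L" "cong z (c @ y0 @ [l])" "z \<in> lists L" by (auto simp: WI_def)
    then have "cong z ((c @ y0) @ [l])" "c @ y0 \<in> lists L" using y0l by auto
    then show "z \<in> WI [l]" using \<open>z \<in> lists L\<close> unfolding WI_def by blast
  qed
  have "WI x \<inter> WI [l] = {} \<or> (\<exists>m\<in>lists L. WI x \<inter> WI [l] = WI m)"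
    using single[of x v b] snoc.prems lL l by simp
  then show ?case
  proof
    assume "WI x \<inter> WI [l] = {}"
    then show ?case using sub by blast
  next
    assume "\<exists>m\<in>lists L. WI x \<inter> WI [l] = WI m"
    then obtain m where m: "m \<in> lists L" "WI x \<inter> WI [l] = WI m" by blast
    have "m \<in> WI [l]" using mem_WI_self[OF m(1)] m(2) by blast
    then obtain m' where m': "m' \<in> lists L" "cong m (m' @ [l])" by (auto simp: WI_def)
    have Wm: "WI m = WI (m' @ [l])" using WI_cong[OF m'(2)] .
    have "WI x \<inter> WI (y0 @ [l]) = WI x \<inter> WI [l] \<inter> WI (y0 @ [l])" using sub by blast
    also have "\<dots> = WI (m' @ [l]) \<inter> WI (y0 @ [l])" using m(2) Wm by simp
    also have "\<dots> = {z. \<exists>w\<in>WI m' \<inter> WI y0. cong z (w @ [l])}" using WI_snoc_inter[OF m'(1) y0l lL] .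
    finally have eq: "WI x \<inter> WI (y0 @ [l]) = {z. \<exists>w\<in>WI m' \<inter> WI y0. cong z (w @ [l])}" .
    have "WI m' \<inter> WI y0 = {} \<or> (\<exists>p\<in>lists L. WI m' \<inter> WI y0 = WI p)"
      using snoc.IH[OF y0l m'(1)] by (simp add: Int_commute)
    then show ?case
    proof
      assume "WI m' \<inter> WI y0 = {}"
      then show ?case using eq by simp
    next
      assume "\<exists>p\<in>lists L. WI m' \<inter> WI y0 = WI p"
      then obtain p where p: "p \<in> lists L" "WI m' \<inter> WI y0 = WI p" by blast
      have "WI x \<inter> WI (y0 @ [l]) = WI (p @ [l])" using eq p WI_ext[OF p(1) lL] by simp
      moreover have "p @ [l] \<in> lists L" using p lL by simp
      ultimately show ?case by blast
    qed
  qed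
qed

lemma main: "left_LCM_monoid M"
  by (rule LCM_from_words) (rule general)

end

theorem theorem2p6:
  fixes V :: "'v set" and E :: "('v \<times> 'v) set" and C :: "'v \<Rightarrow> 'a monoid"
  assumes "E \<subseteq> V \<times> V" and "irrefl E" and "sym E"
    and "\<forall>v\<in>V. left_LCM_monoid (C v)"
  shows "left_LCM_monoid (graph_product V E C)"
proof -
  interpret gpl V E C using assms by unfold_locales
  show ?thesis by (rule main)
qed


end
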